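(* Let $i,j,k$ be integers with $j>0$ and $0\le k<i$, and suppose $(i,j,k)$ is a virtual knot (one component). Then \[ \mathrm{vu}((i,j,k))\le \frac{(i-1)(j-1)+k}{2}. \]
   Context: Braid conventions: braids on $i$ strands are drawn horizontally, oriented left to right, with positions $1,\dots,i$ numbered from top to bottom, and words are read left to right. The generator $\sigma_m$ is a classical (positive) crossing at which the strand in position $m$ moves to position $m+1$, passing over the strand moving from position $m+1$ to position $m$. Virtual crossings carry no over/under information. $VB^1_{i,j}$ is obtained from $(\sigma_1\cdots\sigma_{i-1})^j$ by replacing the crossings of the first (left-most) block $\sigma_1\cdots\sigma_{i-1}$ by virtual crossings. $B_k=\sigma_k\cdots\sigma_1$, with $B_0$ trivial. $(i,j,k)$ is the closure of $VB^1_{i,j}B_k$. Virtual knots are considered up to generalized Reidemeister moves: classical R1–R3, virtual VR1–VR3 and mixed MR. A crossing change switches a classical crossing. A virtual knot is virtually null-homotopic if it can be turned into the unknot by these moves and crossing changes. For such a knot $K$, $\mathrm{vu}(K)$ is the minimal number of crossing changes needed to do so. *)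

theory Defs
  imports Main
begin

text \<open>A (one-component) virtual knot diagram is encoded by its signed Gauss code:
  the cyclic word of crossings met while travelling once along the knot.  An entry
  (c, ov, s) records the crossing label c, whether the strand passes over (ov = True)
  or under (ov = False) at this passage, and the sign of the crossing (s = True means
  positive).  Virtual crossings are not recorded; virtual and mixed moves
  (VR1-VR3, MR) do not change the Gauss code, so generalized Reidemeister
  equivalence of virtual knots is the equivalence of Gauss codes generated by
  cyclic rotation and the Gauss-code versions of R1, R2, R3.\<close>

type_synonym entry = "nat \<times> bool \<times> bool"
type_synonym gcode = "entry list"

definition labels :: "gcode \<Rightarrow> nat set" where
  "labels w = fst ` set w"

definition sg :: "bool \<Rightarrow> int" where
  "sg b = (if b then 1 else -1)"

text \<open>R3: three strands T (top), M (middle), B (bottom) pairwise crossing at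
  a = T over M, b = T over B, c = M over B.  Booleans s1, s2, s3 give the order of
  the two crossings along T (a before b), M (a before c), B (b before c).
  Geometric realizability of the triangle (with orientation rho) forces the sign
  relations below.\<close>

definition r3_segments :: "gcode \<Rightarrow> gcode \<Rightarrow> gcode \<Rightarrow> bool" where
  "r3_segments S1 S2 S3 \<longleftrightarrow>
    (\<exists>a b c ea eb ec s1 s2 s3 rho.
       distinct [a, b, c] \<and>
       sg ea = sg rho * sg s1 * sg s2 \<and>
       sg eb = sg rho * sg s1 * sg s3 \<and>
       sg ec = sg rho * sg s2 * sg s3 \<and>
       (let T = (if s1 then [(a, True, ea), (b, True, eb)] else [(b, True, eb), (a, True, ea)]);
            M = (if s2 then [(a, False, ea), (c, True, ec)] else [(c, True, ec), (a, False, ea)]);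
            B = (if s3 then [(b, False, eb), (c, False, ec)] else [(c, False, ec), (b, False, eb)])
        in (S1, S2, S3) \<in> {(T, M, B), (T, B, M), (M, T, B), (M, B, T), (B, T, M), (B, M, T)}))"

inductive vmove :: "gcode \<Rightarrow> gcode \<Rightarrow> bool" where
  rotate: "vmove w (rotate1 w)"
| R1: "c \<notin> labels (u @ v) \<Longrightarrow>
       vmove (u @ v) (u @ [(c, ov, e), (c, \<not> ov, e)] @ v)"
| R2: "a \<noteq> b \<Longrightarrow> a \<notin> labels (u @ v @ x) \<Longrightarrow> b \<notin> labels (u @ v @ x) \<Longrightarrow>
       P = [(a, ov, e), (b, ov, \<not> e)] \<Longrightarrow>
       Q = [(a, \<not> ov, e), (b, \<not> ov, \<not> e)] \<or> Q = [(b, \<not> ov, \<not> e), (a, \<not> ov, e)] \<Longrightarrow>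
       vmove (u @ v @ x) (u @ P @ v @ Q @ x)"
| R3: "r3_segments S1 S2 S3 \<Longrightarrow>
       vmove (p1 @ S1 @ p2 @ S2 @ p3 @ S3 @ p4)
             (p1 @ rev S1 @ p2 @ rev S2 @ p3 @ rev S3 @ p4)"

definition vequiv :: "gcode \<Rightarrow> gcode \<Rightarrow> bool" where
  "vequiv = (sup vmove (conversep vmove))\<^sup>*\<^sup>*"

definition crossing_change :: "nat \<Rightarrow> gcode \<Rightarrow> gcode" where
  "crossing_change c w = map (\<lambda>(d, ov, s). if d = c then (d, \<not> ov, \<not> s) else (d, ov, s)) w"

inductive unknot_with :: "gcode \<Rightarrow> nat \<Rightarrow> bool" where
  base: "unknot_with [] 0"
| move: "vequiv w w' \<Longrightarrow> unknot_with w' n \<Longrightarrow> unknot_with w n"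
| cc: "c \<in> labels w \<Longrightarrow> unknot_with (crossing_change c w) n \<Longrightarrow> unknot_with w (Suc n)"

definition null_homotopic :: "gcode \<Rightarrow> bool" where
  "null_homotopic w \<longleftrightarrow> (\<exists>n. unknot_with w n)"

definition vu :: "gcode \<Rightarrow> nat" where
  "vu w = (LEAST n. unknot_with w n)"

datatype letter = Virt nat | Cl nat

definition sw :: "nat \<Rightarrow> nat \<Rightarrow> nat" where
  "sw m p = (if p = m then m + 1 else if p = m + 1 then m else p)"

text \<open>Passing a strand at position p through a letter with index n (its crossing
  label).  At sigma_m the strand from position m passes over (to m+1), the strand
  from m+1 passes under; the crossing is positive.\<close>
fun step :: "nat \<Rightarrow> letter \<Rightarrow> nat \<Rightarrow> gcode \<times> nat" where
  "step n (Virt m) p = ([], sw m p)"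
| "step n (Cl m) p =
     ((if p = m then [(n, True, True)] else if p = m + 1 then [(n, False, True)] else []), sw m p)"

fun trav :: "nat \<Rightarrow> letter list \<Rightarrow> nat \<Rightarrow> gcode \<times> nat" where
  "trav n [] p = ([], p)"
| "trav n (l # ls) p =
     (let (e, p') = step n l p; (es, q) = trav (Suc n) ls p' in (e @ es, q))"

definition bperm :: "letter list \<Rightarrow> nat \<Rightarrow> nat" where
  "bperm w p = snd (trav 0 w p)"

definition closure_is_knot :: "nat \<Rightarrow> letter list \<Rightarrow> bool" where
  "closure_is_knot i w \<longleftrightarrow> (\<forall>p \<in> {1..i}. \<exists>t. (bperm w ^^ t) 1 = p)"

definition closure_code :: "nat \<Rightarrow> letter list \<Rightarrow> gcode" where
  "closure_code i w = concat (map (\<lambda>t. fst (trav 0 w ((bperm w ^^ t) 1))) [0..<i])"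

definition VB1 :: "nat \<Rightarrow> nat \<Rightarrow> letter list" where
  "VB1 i j = map Virt [1..<i] @ concat (replicate (j - 1) (map Cl [1..<i]))"

definition Bk :: "nat \<Rightarrow> letter list" where
  "Bk k = map Cl (rev [1..<k + 1])"

definition ijk_braid :: "nat \<Rightarrow> nat \<Rightarrow> nat \<Rightarrow> letter list" where
  "ijk_braid i j k = VB1 i j @ Bk k"

end

theory Submission
  imports Defs
begin

type_synonym lt = "nat \<times> nat \<times> bool"

fun ent :: "lt \<Rightarrow> nat \<Rightarrow> entry list" where
  "ent (l, m, e) p = (if p = m then [(l, e, e)] else if p = Suc m then [(l, \<not> e, e)] else [])"

fun gpos :: "lt list \<Rightarrow> nat \<Rightarrow> nat" where
  "gpos [] p = p"
| "gpos ((l, m, e) # W) p = gpos W (sw m p)"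

fun gtr :: "lt list \<Rightarrow> nat \<Rightarrow> entry list" where
  "gtr [] p = []"
| "gtr ((l, m, e) # W) p = ent (l, m, e) p @ gtr W (sw m p)"

definition nu :: "nat \<Rightarrow> nat \<Rightarrow> nat" where
  "nu i p = (if p = 1 then i else p - 1)"

definition GG :: "nat \<Rightarrow> lt list \<Rightarrow> nat \<Rightarrow> nat" where
  "GG i W q = nu i (gpos W q)"

definition orb :: "nat \<Rightarrow> lt list \<Rightarrow> nat list" where
  "orb i W = map (\<lambda>t. (GG i W ^^ t) i) [0..<i]"

definition gcl :: "nat \<Rightarrow> lt list \<Rightarrow> gcode" where
  "gcl i W = concat (map (gtr W) (orb i W))"

definition kn :: "nat \<Rightarrow> lt list \<Rightarrow> bool" where
  "kn i W \<longleftrightarrow> distinct (orb i W) \<and> (GG i W ^^ i) i = i"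

definition wfw :: "nat \<Rightarrow> lt list \<Rightarrow> bool" where
  "wfw i W \<longleftrightarrow> (\<forall>x\<in>set W. 1 \<le> fst (snd x) \<and> fst (snd x) < i)"

fun goodr :: "bool \<Rightarrow> nat set \<Rightarrow> gcode \<Rightarrow> bool" where
  "goodr b S [] = True"
| "goodr b S (e # w) = ((fst e \<notin> S \<longrightarrow> fst (snd e) = b) \<and> goodr b (insert (fst e) S) w)"

lemma sw_sw[simp]: "sw m (sw m p) = p"
  by (simp add: sw_def)

lemma sw_inj: "sw m p = sw m q \<longleftrightarrow> p = q"
  by (metis sw_sw)

lemma gpos_Cons': "gpos (x # W) p = gpos W (sw (fst (snd x)) p)"
  by (cases x) auto

lemma gtr_Cons': "gtr (x # W) p = ent x p @ gtr W (sw (fst (snd x)) p)"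
  by (cases x) auto

lemma gpos_append[simp]: "gpos (U @ V) p = gpos V (gpos U p)"
  by (induction U arbitrary: p) (auto simp: gpos_Cons')

lemma gtr_append[simp]: "gtr (U @ V) p = gtr U p @ gtr V (gpos U p)"
  by (induction U arbitrary: p) (auto simp: gpos_Cons' gtr_Cons')

lemma gpos_rev: "gpos (rev U) (gpos U p) = p"
  by (induction U arbitrary: p) (auto simp: gpos_Cons')

lemma gpos_rev2: "gpos U (gpos (rev U) p) = p"
  using gpos_rev[of "rev U" p] by simp

lemma gpos_inj: "gpos U p = gpos U q \<longleftrightarrow> p = q"
  by (metis gpos_rev)

lemma wf_append[simp]: "wfw i (U @ V) \<longleftrightarrow> wfw i U \<and> wfw i V"
  by (auto simp: wfw_def)

lemma wf_Cons[simp]: "wfw i (x # V) \<longleftrightarrow> 1 \<le> fst (snd x) \<and> fst (snd x) < i \<and> wfw i V"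
  by (auto simp: wfw_def)

lemma wf_Nil[simp]: "wfw i []"
  by (auto simp: wfw_def)

lemma sw_range: "1 \<le> m \<Longrightarrow> m < i \<Longrightarrow> 1 \<le> p \<Longrightarrow> p \<le> i \<Longrightarrow> 1 \<le> sw m p \<and> sw m p \<le> i"
  by (auto simp: sw_def)

lemma gpos_range: "wfw i W \<Longrightarrow> 1 \<le> p \<Longrightarrow> p \<le> i \<Longrightarrow> 1 \<le> gpos W p \<and> gpos W p \<le> i"
proof (induction W arbitrary: p)
  case (Cons x W p)
  then show ?case using sw_range[of "fst (snd x)" i p] by (auto simp: gpos_Cons')
qed auto

lemma wf_rev[simp]: "wfw i (rev W) = wfw i W"
  by (auto simp: wfw_def)

lemma nu_range: "1 \<le> i \<Longrightarrow> 1 \<le> p \<Longrightarrow> p \<le> i \<Longrightarrow> 1 \<le> nu i p \<and> nu i p \<le> i"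
  by (auto simp: nu_def)

lemma GG_range: "wfw i W \<Longrightarrow> 1 \<le> p \<Longrightarrow> p \<le> i \<Longrightarrow> 1 \<le> GG i W p \<and> GG i W p \<le> i"
  unfolding GG_def using gpos_range nu_range by (metis le_trans)

lemma GG_pow_range: "wfw i W \<Longrightarrow> 1 \<le> i \<Longrightarrow> 1 \<le> (GG i W ^^ t) i \<and> (GG i W ^^ t) i \<le> i"
proof (induction t)
  case (Suc t)
  then show ?case using GG_range[OF Suc(2), of "(GG i W ^^ t) i"] by auto
qed auto

lemma orb_set: assumes "wfw i W" "kn i W" shows "set (orb i W) = {1..i}"
proof (cases "i = 0")
  case True then show ?thesis by (simp add: orb_def)
next
  case False
  have sub: "set (orb i W) \<subseteq> {1..i}" using GG_pow_range[OF assms(1)] False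
    by (auto simp: orb_def)
  have "card (set (orb i W)) = i" using assms(2) distinct_card by (fastforce simp: kn_def orb_def)
  then show ?thesis using sub by (simp add: card_subset_eq)
qed

lemma vequiv_refl[simp]: "vequiv w w"
  by (simp add: vequiv_def)

lemma vequiv_trans: "vequiv a b \<Longrightarrow> vequiv b c \<Longrightarrow> vequiv a c"
  unfolding vequiv_def by (rule rtranclp_trans)

lemma vequiv_fwd: "vmove a b \<Longrightarrow> vequiv a b"
  unfolding vequiv_def by (rule r_into_rtranclp) simp

lemma vequiv_bwd: "vmove b a \<Longrightarrow> vequiv a b"
  unfolding vequiv_def by (rule r_into_rtranclp) simp

lemma split2:
  assumes "distinct qs" "a \<in> set qs" "b \<in> set qs" "a \<noteq> b"
  shows "\<exists>x y xs1 xs2 xs3. {x, y} = {a, b} \<and> qs = xs1 @ x # xs2 @ y # xs3"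
proof -
  obtain xs ys where qs: "qs = xs @ a # ys" using split_list[OF assms(2)] by blast
  show ?thesis
  proof (cases "b \<in> set xs")
    case True
    then obtain xs1 xs2 where "xs = xs1 @ b # xs2" using split_list by metis
    then have "qs = xs1 @ b # xs2 @ a # ys" using qs by simp
    moreover have "{b, a} = {a, b}" by blast
    ultimately show ?thesis by blast
  next
    case False
    then have "b \<in> set ys" using assms qs by auto
    then obtain ys1 ys2 where "ys = ys1 @ b # ys2" using split_list by metis
    then have "qs = xs @ a # ys1 @ b # ys2" using qs by simp
    then show ?thesis by blast
  qed
qed

lemma split3:
  assumes "distinct qs" "a \<in> set qs" "b \<in> set qs" "c \<in> set qs" "a \<noteq> b" "a \<noteq> c" "b \<noteq> c"
  shows "\<exists>x y z xs1 xs2 xs3 xs4. {x, y, z} = {a, b, c} \<and> qs = xs1 @ x # xs2 @ y # xs3 @ z # xs4"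
proof -
  obtain x y xs1 xs2 xs3 where xy: "{x, y} = {a, b}" and qs: "qs = xs1 @ x # xs2 @ y # xs3"
    using split2[OF assms(1,2,3,5)] by blast
  have "c \<noteq> x" "c \<noteq> y" using xy assms by auto
  then have "c \<in> set xs1 \<or> c \<in> set xs2 \<or> c \<in> set xs3" using assms(4) qs by auto
  then show ?thesis
  proof (elim disjE)
    assume "c \<in> set xs1"
    then obtain u v where "xs1 = u @ c # v" using split_list by metis
    then have "qs = u @ c # v @ x # xs2 @ y # xs3" using qs by simp
    moreover have "{c, x, y} = {a, b, c}" using xy by auto
    ultimately show ?thesis by blast
  next
    assume "c \<in> set xs2"
    then obtain u v where "xs2 = u @ c # v" using split_list by metis
    then have "qs = xs1 @ x # u @ c # v @ y # xs3" using qs by simp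
    moreover have "{x, c, y} = {a, b, c}" using xy by auto
    ultimately show ?thesis by blast
  next
    assume "c \<in> set xs3"
    then obtain u v where "xs3 = u @ c # v" using split_list by metis
    then have "qs = xs1 @ x # xs2 @ y # u @ c # v" using qs by simp
    moreover have "{x, y, c} = {a, b, c}" using xy by auto
    ultimately show ?thesis by blast
  qed
qed

lemma concat_map_agree:
  "(\<forall>q\<in>set xs. F q = F' q) \<Longrightarrow> concat (map F xs) = concat (map F' xs)"
  by (induction xs) auto

lemma concat2:
  assumes "distinct qs" "a \<in> set qs" "b \<in> set qs" "a \<noteq> b"
    and "\<And>q. q \<noteq> a \<Longrightarrow> q \<noteq> b \<Longrightarrow> F q = F' q"
    and "\<And>q. q \<in> {a, b} \<Longrightarrow> F q = A q @ X q @ B q \<and> F' q = A q @ B q"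
  shows "\<exists>x y u v z. {x, y} = {a, b} \<and> concat (map F qs) = u @ X x @ v @ X y @ z
           \<and> concat (map F' qs) = u @ v @ z"
proof -
  obtain x y xs1 xs2 xs3 where xy: "{x, y} = {a, b}" and qs: "qs = xs1 @ x # xs2 @ y # xs3"
    using split2[OF assms(1-4)] by blast
  have d: "x \<notin> set xs1" "x \<notin> set xs2" "x \<notin> set xs3" "y \<notin> set xs1" "y \<notin> set xs2" "y \<notin> set xs3"
    using assms(1) qs by auto
  have ag: "\<forall>q\<in>set xs1 \<union> set xs2 \<union> set xs3. F q = F' q"
    using d xy assms(5) by (metis Un_iff doubleton_eq_iff)
  have e1: "concat (map F xs1) = concat (map F' xs1)" "concat (map F xs2) = concat (map F' xs2)"
    "concat (map F xs3) = concat (map F' xs3)" using ag concat_map_agree by (metis Un_iff)+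
  have fx: "F x = A x @ X x @ B x" "F' x = A x @ B x" "F y = A y @ X y @ B y" "F' y = A y @ B y"
    using assms(6) xy by blast+
  show ?thesis
    by (rule exI[of _ x], rule exI[of _ y],
        rule exI[of _ "concat (map F' xs1) @ A x"], rule exI[of _ "B x @ concat (map F' xs2) @ A y"],
        rule exI[of _ "B y @ concat (map F' xs3)"]) (simp add: qs xy e1 fx)
qed

lemma concat3:
  assumes "distinct qs" "a \<in> set qs" "b \<in> set qs" "c \<in> set qs" "a \<noteq> b" "a \<noteq> c" "b \<noteq> c"
    and "\<And>q. q \<noteq> a \<Longrightarrow> q \<noteq> b \<Longrightarrow> q \<noteq> c \<Longrightarrow> F q = F' q"
    and "\<And>q. q \<in> {a, b, c} \<Longrightarrow> F q = A q @ X q @ B q \<and> F' q = A q @ Y q @ B q"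
  shows "\<exists>x y z u1 u2 u3 u4. {x, y, z} = {a, b, c}
           \<and> concat (map F qs) = u1 @ X x @ u2 @ X y @ u3 @ X z @ u4
           \<and> concat (map F' qs) = u1 @ Y x @ u2 @ Y y @ u3 @ Y z @ u4"
proof -
  obtain x y z xs1 xs2 xs3 xs4 where xy: "{x, y, z} = {a, b, c}"
    and qs: "qs = xs1 @ x # xs2 @ y # xs3 @ z # xs4"
    using split3[OF assms(1-7)] by blast
  have d: "\<forall>q\<in>set xs1 \<union> set xs2 \<union> set xs3 \<union> set xs4. q \<noteq> x \<and> q \<noteq> y \<and> q \<noteq> z"
    using assms(1) qs by auto
  have ag: "\<forall>q\<in>set xs1 \<union> set xs2 \<union> set xs3 \<union> set xs4. F q = F' q"
  proof
    fix q assume "q \<in> set xs1 \<union> set xs2 \<union> set xs3 \<union> set xs4"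
    then have "q \<notin> {a, b, c}" using d xy by auto
    then show "F q = F' q" using assms(8) by auto
  qed
  have e1: "concat (map F xs1) = concat (map F' xs1)" "concat (map F xs2) = concat (map F' xs2)"
    "concat (map F xs3) = concat (map F' xs3)" "concat (map F xs4) = concat (map F' xs4)"
    using ag concat_map_agree by (metis Un_iff)+
  have xin: "x \<in> {a,b,c}" "y \<in> {a,b,c}" "z \<in> {a,b,c}" using xy by auto
  have fx: "F x = A x @ X x @ B x" "F' x = A x @ Y x @ B x" "F y = A y @ X y @ B y" "F' y = A y @ Y y @ B y"
     "F z = A z @ X z @ B z" "F' z = A z @ Y z @ B z"
    using assms(9)[OF xin(1)] assms(9)[OF xin(2)] assms(9)[OF xin(3)] by blast+
  show ?thesis
    by (rule exI[of _ x], rule exI[of _ y], rule exI[of _ z],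
        rule exI[of _ "concat (map F' xs1) @ A x"], rule exI[of _ "B x @ concat (map F' xs2) @ A y"],
        rule exI[of _ "B y @ concat (map F' xs3) @ A z"], rule exI[of _ "B z @ concat (map F' xs4)"])
      (simp add: qs xy e1 fx)
qed

lemma perm6_12: "(x,y,z) \<in> {(T,M,B),(T,B,M),(M,T,B),(M,B,T),(B,T,M),(B,M,T)} \<Longrightarrow>
   (y,x,z) \<in> {(T,M,B),(T,B,M),(M,T,B),(M,B,T),(B,T,M),(B,M,T)}"
  by auto

lemma perm6_23: "(x,y,z) \<in> {(T,M,B),(T,B,M),(M,T,B),(M,B,T),(B,T,M),(B,M,T)} \<Longrightarrow>
   (x,z,y) \<in> {(T,M,B),(T,B,M),(M,T,B),(M,B,T),(B,T,M),(B,M,T)}"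
  by auto

lemma r3_swap12: "r3_segments S1 S2 S3 \<Longrightarrow> r3_segments S2 S1 S3"
  unfolding r3_segments_def Let_def
  apply (elim exE conjE)
  subgoal for a b c ea eb ec s1 s2 s3 rho
    apply (rule exI[of _ a], rule exI[of _ b], rule exI[of _ c], rule exI[of _ ea], rule exI[of _ eb],
      rule exI[of _ ec], rule exI[of _ s1], rule exI[of _ s2], rule exI[of _ s3], rule exI[of _ rho])
    apply (intro conjI)
        apply assumption+
    apply (erule perm6_12)
    done
  done

lemma r3_swap23: "r3_segments S1 S2 S3 \<Longrightarrow> r3_segments S1 S3 S2"
  unfolding r3_segments_def Let_def
  apply (elim exE conjE)
  subgoal for a b c ea eb ec s1 s2 s3 rho
    apply (rule exI[of _ a], rule exI[of _ b], rule exI[of _ c], rule exI[of _ ea], rule exI[of _ eb],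
      rule exI[of _ ec], rule exI[of _ s1], rule exI[of _ s2], rule exI[of _ s3], rule exI[of _ rho])
    apply (intro conjI)
        apply assumption+
    apply (erule perm6_23)
    done
  done

lemma r3_perm:
  assumes "r3_segments (S t) (S m) (S b)" "t \<noteq> m" "t \<noteq> b" "m \<noteq> b" "{x, y, z} = {t, m, b}"
  shows "r3_segments (S x) (S y) (S z)"
proof -
  have x: "x \<in> {t,m,b}" and y: "y \<in> {t,m,b}" and z: "z \<in> {t,m,b}" using assms(5) by blast+
  have dxy: "x \<noteq> y \<and> x \<noteq> z \<and> y \<noteq> z"
  proof (rule ccontr)
    assume "\<not> ?thesis"
    then have "card {x, y, z} \<le> 2" by (auto simp: card_insert_if)
    moreover have "card {t, m, b} = 3" using assms(2-4) by simp
    ultimately show False using assms(5) by simp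
  qed
  have s12: "r3_segments (S t) (S m) (S b) \<Longrightarrow> r3_segments (S m) (S t) (S b)" for t m b
    by (rule r3_swap12)
  have s23: "r3_segments (S t) (S m) (S b) \<Longrightarrow> r3_segments (S t) (S b) (S m)" for t m b
    by (rule r3_swap23)
  from x y z dxy show ?thesis
    apply (simp only: insert_iff empty_iff simp_thms)
    apply (elim disjE)
    using assms(1) s12 s23 by metis+
qed

lemma labels_ent: "fst ` set (ent x p) \<subseteq> {fst x}"
  by (cases x) auto

lemma labels_gtr: "fst ` set (gtr W p) \<subseteq> fst ` set W"
proof (induction W arbitrary: p)
  case (Cons x W)
  then show ?case using labels_ent[of x p] by (auto simp: gtr_Cons')
qed simp

lemma labels_gcl: "labels (gcl i W) \<subseteq> fst ` set W"
proof
  fix z assume "z \<in> labels (gcl i W)"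
  then obtain e where "e \<in> set (gcl i W)" "z = fst e" by (auto simp: labels_def)
  then obtain q where "e \<in> set (gtr W q)" by (auto simp: gcl_def)
  then show "z \<in> fst ` set W" using labels_gtr \<open>z = fst e\<close> by blast
qed

lemma orb_cong: "gpos W = gpos W' \<Longrightarrow> orb i W = orb i W'"
  unfolding orb_def GG_def by simp

lemma GG_cong: "gpos W = gpos W' \<Longrightarrow> GG i W = GG i W'"
  unfolding GG_def by simp

lemma kn_cong: "gpos W = gpos W' \<Longrightarrow> kn i W = kn i W'"
  unfolding kn_def using orb_cong[of W W' i] GG_cong[of W W' i] by simp

lemma goodr_filter:
  "goodr b S w \<Longrightarrow> (\<forall>x. x \<notin> L \<longrightarrow> (x \<in> S' \<longleftrightarrow> x \<in> S)) \<Longrightarrow> goodr b S' (filter (\<lambda>e. fst e \<notin> L) w)"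
proof (induction w arbitrary: S S')
  case (Cons e w)
  show ?case
  proof (cases "fst e \<in> L")
    case True
    then show ?thesis using Cons.prems Cons.IH[of "insert (fst e) S" S'] by auto
  next
    case False
    then show ?thesis using Cons.prems Cons.IH[of "insert (fst e) S" "insert (fst e) S'"] by auto
  qed
qed simp

lemma goodr_swap:
  "goodr b S (p @ [x, y] @ q) \<Longrightarrow> fst x \<noteq> fst y \<Longrightarrow> goodr b S (p @ [y, x] @ q)"
proof (induction p arbitrary: S)
  case Nil
  then show ?case by (auto simp: insert_commute)
qed auto

lemma goodr_prefix:
  "goodr b S (P @ R) \<Longrightarrow> distinct (map fst P) \<Longrightarrow> fst ` set P \<inter> S = {} \<Longrightarrow> \<forall>e\<in>set P. fst (snd e) = b"
proof (induction P arbitrary: S)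
  case (Cons e P)
  have h: "goodr b (insert (fst e) S) (P @ R)" "fst e \<notin> S \<longrightarrow> fst (snd e) = b" using Cons.prems by auto
  have "fst ` set P \<inter> insert (fst e) S = {}" using Cons.prems by auto
  then have "\<forall>e\<in>set P. fst (snd e) = b" using Cons.IH[OF h(1)] Cons.prems by auto
  then show ?case using h(2) Cons.prems by auto
qed simp

lemma comm_gcl:
  assumes "Suc m < m' \<or> Suc m' < m"
  shows "gcl i (U @ [(l,m,e),(l',m',e')] @ V) = gcl i (U @ [(l',m',e'),(l,m,e)] @ V)"
proof -
  have ne: "m \<noteq> m'" "m \<noteq> Suc m'" "m' \<noteq> Suc m" "Suc m \<noteq> Suc m'" using assms by auto
  have gp: "gpos [(l,m,e),(l',m',e')] = gpos [(l',m',e'),(l,m,e)]"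
    using ne by (auto simp: sw_def fun_eq_iff)
  have gt: "gtr [(l,m,e),(l',m',e')] p = gtr [(l',m',e'),(l,m,e)] p" for p
    using ne by (auto simp: sw_def)
  have g1: "gpos (U @ [(l,m,e),(l',m',e')] @ V) = gpos (U @ [(l',m',e'),(l,m,e)] @ V)"
    apply (rule ext) 
    apply (simp only: gpos_append)
    apply (simp only: gp)
    done
  have g2: "gtr (U @ [(l,m,e),(l',m',e')] @ V) q = gtr (U @ [(l',m',e'),(l,m,e)] @ V) q" for q
    apply (simp only: gtr_append gt)
    apply (simp only: gp)
    done
  have o: "orb i (U @ [(l,m,e),(l',m',e')] @ V) = orb i (U @ [(l',m',e'),(l,m,e)] @ V)"
    by (rule orb_cong[OF g1])
  show ?thesis unfolding gcl_def o
    by (rule arg_cong[where f=concat], rule map_cong[OF refl], rule g2)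
qed

lemma r2_gcl:
  assumes wf: "wfw i (U @ L @ V)" and dl: "distinct (map fst (U @ L @ V))" and k: "kn i (U @ L @ V)"
    and L: "L = [(l1,m,e),(l2,m,\<not>e)]"
  shows "vequiv (gcl i (U @ L @ V)) (gcl i (U @ V)) \<and>
         (goodr b {} (gcl i (U @ L @ V)) \<longrightarrow> goodr b {} (gcl i (U @ V)))"
proof -
  have gL: "gpos L = id" using L by (auto simp: fun_eq_iff)
  have gW: "gpos (U @ L @ V) = gpos (U @ V)" using gL by (simp add: fun_eq_iff)
  let ?qs = "orb i (U @ V)"
  have oeq: "orb i (U @ L @ V) = ?qs" using orb_cong[OF gW] .
  have dq: "distinct ?qs" using k oeq by (simp add: kn_def)
  have sq: "set ?qs = {1..i}" using orb_set[OF wf k] oeq by simp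
  have m1: "1 \<le> m" "m < i" using wf L by auto
  define a where "a = gpos (rev U) m"
  define bb where "bb = gpos (rev U) (Suc m)"
  have wU: "wfw i (rev U)" using wf by simp
  have ain: "a \<in> set ?qs" "bb \<in> set ?qs" using gpos_range[OF wU, of m] gpos_range[OF wU, of "Suc m"] m1 sq
    by (auto simp: a_def bb_def)
  have ab: "a \<noteq> bb" unfolding a_def bb_def using gpos_inj[of "rev U" m "Suc m"] by simp
  have ga: "gpos U a = m" "gpos U bb = Suc m" by (simp_all add: a_def bb_def gpos_rev2)
  have Lz: "gtr L p = []" if "p \<noteq> m" "p \<noteq> Suc m" for p using that L by (auto simp: sw_def)
  have F: "gtr (U @ L @ V) q = gtr U q @ gtr L (gpos U q) @ gtr V (gpos U q)" for q using gL by simp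
  have F': "gtr (U @ V) q = gtr U q @ [] @ gtr V (gpos U q)" for q by simp
  have agree: "gtr (U @ L @ V) q = gtr (U @ V) q" if "q \<noteq> a" "q \<noteq> bb" for q
  proof -
    have "gpos U q \<noteq> m" "gpos U q \<noteq> Suc m" using that ga gpos_inj by metis+
    then show ?thesis using F[of q] Lz by simp
  qed
  have last: "\<And>q. q \<in> {a, bb} \<Longrightarrow> gtr (U @ L @ V) q = gtr U q @ gtr L (gpos U q) @ gtr V (gpos U q)
      \<and> gtr (U @ V) q = gtr U q @ gtr V (gpos U q)" using F by simp
  obtain x y u v z where xy: "{x, y} = {a, bb}"
    and c1: "concat (map (gtr (U @ L @ V)) ?qs) = u @ gtr L (gpos U x) @ v @ gtr L (gpos U y) @ z"
    and c2: "concat (map (gtr (U @ V)) ?qs) = u @ v @ z"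
    using concat2[where F="gtr (U @ L @ V)" and F'="gtr (U @ V)" and A="\<lambda>q. gtr U q"
        and X="\<lambda>q. gtr L (gpos U q)" and B="\<lambda>q. gtr V (gpos U q)", OF dq ain ab agree last] by blast
  have Xa: "gtr L (gpos U a) = [(l1,e,e),(l2,e,\<not>e)]" using ga L by (simp add: sw_def)
  have Xb: "gtr L (gpos U bb) = [(l1,\<not>e,e),(l2,\<not>e,\<not>e)]" using ga L by (simp add: sw_def)
  have g1: "gcl i (U @ L @ V) = u @ gtr L (gpos U x) @ v @ gtr L (gpos U y) @ z"
    using c1 oeq by (simp add: gcl_def)
  have g2: "gcl i (U @ V) = u @ v @ z" using c2 by (simp add: gcl_def)
  have l12: "l1 \<noteq> l2" "l1 \<notin> fst ` set (U @ V)" "l2 \<notin> fst ` set (U @ V)" using dl L by auto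
  have lab: "l1 \<notin> labels (u @ v @ z)" "l2 \<notin> labels (u @ v @ z)"
    using labels_gcl[of i "U @ V"] g2 l12 by auto
  have xcase: "(x = a \<and> y = bb) \<or> (x = bb \<and> y = a)" using xy ab by (auto simp: doubleton_eq_iff)
  have mv: "vmove (u @ v @ z) (u @ gtr L (gpos U x) @ v @ gtr L (gpos U y) @ z)"
    using xcase
  proof
    assume "x = a \<and> y = bb"
    then show ?thesis using vmove.R2[of l1 l2 u v z "[(l1,e,e),(l2,e,\<not>e)]" e e "[(l1,\<not>e,e),(l2,\<not>e,\<not>e)]"]
      using Xa Xb lab l12 by simp
  next
    assume h: "x = bb \<and> y = a"
    show ?thesis using vmove.R2[of l1 l2 u v z "[(l1,\<not>e,e),(l2,\<not>e,\<not>e)]" "\<not>e" e "[(l1,\<not>\<not>e,e),(l2,\<not>\<not>e,\<not>e)]"]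
      using h Xa Xb lab l12 by simp
  qed
  have filt: "u @ v @ z = filter (\<lambda>e. fst e \<notin> {l1, l2}) (u @ gtr L (gpos U x) @ v @ gtr L (gpos U y) @ z)"
  proof -
    have "\<forall>e\<in>set (u @ v @ z). fst e \<notin> {l1, l2}" using lab by (auto simp: labels_def)
    moreover have "filter (\<lambda>e. fst e \<notin> {l1, l2}) (gtr L (gpos U x)) = []"
       "filter (\<lambda>e. fst e \<notin> {l1, l2}) (gtr L (gpos U y)) = []"
      using xcase Xa Xb by auto
    ultimately show ?thesis by simp
  qed
  show ?thesis
  proof
    show "vequiv (gcl i (U @ L @ V)) (gcl i (U @ V))" using g1 g2 mv vequiv_bwd by simp
  next
    show "goodr b {} (gcl i (U @ L @ V)) \<longrightarrow> goodr b {} (gcl i (U @ V))"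
    proof
      assume h: "goodr b {} (gcl i (U @ L @ V))"
      have e: "gcl i (U @ V) = filter (\<lambda>e. fst e \<notin> {l1, l2}) (gcl i (U @ L @ V))"
        by (simp only: g1 g2) (rule filt)
      show "goodr b {} (gcl i (U @ V))" unfolding e by (rule goodr_filter[OF h]) simp
    qed
  qed
qed

lemma r3_TT: "distinct [l1,l2,l3] \<Longrightarrow> r3_segments [(l1,True,False),(l2,True,False)]
   [(l2,False,False),(l3,True,True)] [(l1,False,False),(l3,False,True)]"
  unfolding r3_segments_def Let_def sg_def
  by (rule exI[of _ l2], rule exI[of _ l1], rule exI[of _ l3], rule exI[of _ False], rule exI[of _ False],
      rule exI[of _ True], rule exI[of _ False], rule exI[of _ True], rule exI[of _ True], rule exI[of _ True]) auto

lemma r3_TF: "distinct [l1,l2,l3] \<Longrightarrow> r3_segments [(l1,True,False),(l2,True,False)]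
   [(l1,False,False),(l3,True,False)] [(l2,False,False),(l3,False,False)]"
  unfolding r3_segments_def Let_def sg_def
  by (rule exI[of _ l1], rule exI[of _ l2], rule exI[of _ l3], rule exI[of _ False], rule exI[of _ False],
      rule exI[of _ False], rule exI[of _ True], rule exI[of _ True], rule exI[of _ True], rule exI[of _ False]) auto

lemma r3_FT: "distinct [l1,l2,l3] \<Longrightarrow> r3_segments [(l2,True,True),(l3,True,True)]
   [(l1,True,True),(l3,False,True)] [(l1,False,True),(l2,False,True)]"
  unfolding r3_segments_def Let_def sg_def
  by (rule exI[of _ l3], rule exI[of _ l2], rule exI[of _ l1], rule exI[of _ True], rule exI[of _ True],
      rule exI[of _ True], rule exI[of _ False], rule exI[of _ False], rule exI[of _ False], rule exI[of _ True]) auto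

lemma r3_FF: "distinct [l1,l2,l3] \<Longrightarrow> r3_segments [(l1,True,True),(l3,True,False)]
   [(l2,True,True),(l3,False,False)] [(l1,False,True),(l2,False,True)]"
  unfolding r3_segments_def Let_def sg_def
  by (rule exI[of _ l3], rule exI[of _ l1], rule exI[of _ l2], rule exI[of _ False], rule exI[of _ True],
      rule exI[of _ True], rule exI[of _ False], rule exI[of _ False], rule exI[of _ True], rule exI[of _ False]) auto


lemma goodr_rev2:
  assumes "goodr b S (p @ X @ q)" "length X = 2" "distinct (map fst X)"
  shows "goodr b S (p @ rev X @ q)"
proof -
  obtain x y where X: "X = [x, y]" using assms(2)
    by (metis (no_types, opaque_lifting) Suc_length_conv length_0_conv numeral_2_eq_2)
  show ?thesis using goodr_swap[of b S p x y q] assms X by simp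
qed

lemma r3_gcl:
  assumes wf: "wfw i (U @ L @ V)" and dl: "distinct (map fst (U @ L @ V))" and k: "kn i (U @ L @ V)"
    and L: "L = [(l1,Suc m,\<not>b),(l2,m,\<not>b),(l3,Suc m,e)]"
    and L': "L' = [(l3,m,e),(l2,Suc m,\<not>b),(l1,m,\<not>b)]"
  shows "vequiv (gcl i (U @ L @ V)) (gcl i (U @ L' @ V)) \<and>
         (goodr c {} (gcl i (U @ L @ V)) \<longrightarrow> goodr c {} (gcl i (U @ L' @ V)))"
proof -
  have gLL: "gpos L = gpos L'" using L L' by (auto simp: fun_eq_iff sw_def)
  have gW: "gpos (U @ L @ V) = gpos (U @ L' @ V)" using gLL by (simp add: fun_eq_iff)
  let ?qs = "orb i (U @ L @ V)"
  have oeq: "orb i (U @ L' @ V) = ?qs" using orb_cong[OF gW] by simp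
  have dq: "distinct ?qs" using k by (simp add: kn_def)
  have sq: "set ?qs = {1..i}" using orb_set[OF wf k] by simp
  have m1: "1 \<le> m" "Suc m < i" using wf L by auto
  define qA where "qA = gpos (rev U) (Suc (Suc m))"
  define qB where "qB = gpos (rev U) (Suc m)"
  define qC where "qC = gpos (rev U) m"
  have wU: "wfw i (rev U)" using wf by simp
  have qin: "qA \<in> set ?qs" "qB \<in> set ?qs" "qC \<in> set ?qs"
    using gpos_range[OF wU, of "Suc (Suc m)"] gpos_range[OF wU, of "Suc m"] gpos_range[OF wU, of m] m1 sq
    by (auto simp: qA_def qB_def qC_def)
  have qd: "qA \<noteq> qB" "qA \<noteq> qC" "qB \<noteq> qC" unfolding qA_def qB_def qC_def using gpos_inj[of "rev U"] by auto
  have gq: "gpos U qA = Suc (Suc m)" "gpos U qB = Suc m" "gpos U qC = m" by (simp_all add: qA_def qB_def qC_def gpos_rev2)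
  have Lz: "gtr L p = [] \<and> gtr L' p = []" if "p \<noteq> m" "p \<noteq> Suc m" "p \<noteq> Suc (Suc m)" for p
    using that L L' by (auto simp: sw_def)
  have F: "gtr (U @ L @ V) q = gtr U q @ gtr L (gpos U q) @ gtr V (gpos L (gpos U q))" for q by simp
  have F': "gtr (U @ L' @ V) q = gtr U q @ gtr L' (gpos U q) @ gtr V (gpos L (gpos U q))" for q using gLL by simp
  have agree: "gtr (U @ L @ V) q = gtr (U @ L' @ V) q" if "q \<noteq> qA" "q \<noteq> qB" "q \<noteq> qC" for q
  proof -
    have "gpos U q \<noteq> m" "gpos U q \<noteq> Suc m" "gpos U q \<noteq> Suc (Suc m)" using that gq gpos_inj by metis+
    then show ?thesis using F[of q] F'[of q] Lz by simp
  qed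
  have last: "\<And>q. q \<in> {qA, qB, qC} \<Longrightarrow> gtr (U @ L @ V) q = gtr U q @ gtr L (gpos U q) @ gtr V (gpos L (gpos U q))
      \<and> gtr (U @ L' @ V) q = gtr U q @ gtr L' (gpos U q) @ gtr V (gpos L (gpos U q))" using F F' by blast
  obtain x y z u1 u2 u3 u4 where xyz: "{x, y, z} = {qA, qB, qC}"
    and c1: "concat (map (gtr (U @ L @ V)) ?qs) = u1 @ gtr L (gpos U x) @ u2 @ gtr L (gpos U y) @ u3 @ gtr L (gpos U z) @ u4"
    and c2: "concat (map (gtr (U @ L' @ V)) ?qs) = u1 @ gtr L' (gpos U x) @ u2 @ gtr L' (gpos U y) @ u3 @ gtr L' (gpos U z) @ u4"
    using concat3[where F="gtr (U @ L @ V)" and F'="gtr (U @ L' @ V)" and A="\<lambda>q. gtr U q"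
        and X="\<lambda>q. gtr L (gpos U q)" and Y="\<lambda>q. gtr L' (gpos U q)" and B="\<lambda>q. gtr V (gpos L (gpos U q))",
        OF dq qin qd agree last] by blast
  define X where "X = (\<lambda>q. gtr L (gpos U q))"
  have XA: "X qA = [(l1,b,\<not>b),(l2,b,\<not>b)]" using gq L by (simp add: X_def sw_def)
  have XB: "X qB = [(l1,\<not>b,\<not>b),(l3,\<not>e,e)]" using gq L by (simp add: X_def sw_def)
  have XC: "X qC = [(l2,\<not>b,\<not>b),(l3,e,e)]" using gq L by (simp add: X_def sw_def)
  have YA: "gtr L' (gpos U qA) = rev (X qA)" using gq L' XA by (simp add: sw_def)
  have YB: "gtr L' (gpos U qB) = rev (X qB)" using gq L' XB by (simp add: sw_def)
  have YC: "gtr L' (gpos U qC) = rev (X qC)" using gq L' XC by (simp add: sw_def)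
  have Y: "gtr L' (gpos U q) = rev (X q)" if "q \<in> {qA, qB, qC}" for q using that YA YB YC by blast
  have xin: "x \<in> {qA,qB,qC}" "y \<in> {qA,qB,qC}" "z \<in> {qA,qB,qC}" using xyz by blast+
  have dl3: "distinct [l1, l2, l3]" using dl L by auto
  have r3: "r3_segments (X x) (X y) (X z)"
  proof (cases b)
    case True
    then show ?thesis
    proof (cases e)
      case True
      then have "r3_segments (X qA) (X qC) (X qB)" using \<open>b\<close> XA XB XC r3_TT[OF dl3] by simp
      then show ?thesis using r3_perm[of X qA qC qB x y z] qd xyz by (simp add: insert_commute)
    next
      case False
      then have "r3_segments (X qA) (X qB) (X qC)" using \<open>b\<close> XA XB XC r3_TF[OF dl3] by simp
      then show ?thesis using r3_perm[of X qA qB qC x y z] qd xyz by (simp add: insert_commute)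
    qed
  next
    case False
    then show ?thesis
    proof (cases e)
      case True
      then have "r3_segments (X qC) (X qB) (X qA)" using \<open>\<not>b\<close> XA XB XC r3_FT[OF dl3] by simp
      then show ?thesis using r3_perm[of X qC qB qA x y z] qd xyz by (simp add: insert_commute)
    next
      case False
      then have "r3_segments (X qB) (X qC) (X qA)" using \<open>\<not>b\<close> XA XB XC r3_FF[OF dl3] by simp
      then show ?thesis using r3_perm[of X qB qC qA x y z] qd xyz by (simp add: insert_commute)
    qed
  qed
  have g1: "gcl i (U @ L @ V) = u1 @ X x @ u2 @ X y @ u3 @ X z @ u4"
    using c1 by (simp add: gcl_def X_def)
  have g2: "gcl i (U @ L' @ V) = u1 @ rev (X x) @ u2 @ rev (X y) @ u3 @ rev (X z) @ u4"
    using c2 oeq Y xin by (simp add: gcl_def)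
  have mv: "vmove (gcl i (U @ L @ V)) (gcl i (U @ L' @ V))"
    unfolding g1 g2 by (rule vmove.R3[OF r3])
  have X2: "length (X q) = 2 \<and> distinct (map fst (X q))" if "q \<in> {qA, qB, qC}" for q
    using that XA XB XC dl3 by auto
  show ?thesis
  proof
    show "vequiv (gcl i (U @ L @ V)) (gcl i (U @ L' @ V))" using mv vequiv_fwd by simp
  next
    show "goodr c {} (gcl i (U @ L @ V)) \<longrightarrow> goodr c {} (gcl i (U @ L' @ V))"
    proof
      assume h: "goodr c {} (gcl i (U @ L @ V))"
      have h1: "goodr c {} (u1 @ rev (X x) @ (u2 @ X y @ u3 @ X z @ u4))"
        using goodr_rev2[of c "{}" u1 "X x" "u2 @ X y @ u3 @ X z @ u4"] h g1 X2[OF xin(1)] by simp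
      have h2: "goodr c {} ((u1 @ rev (X x) @ u2) @ rev (X y) @ (u3 @ X z @ u4))"
        using goodr_rev2[of c "{}" "u1 @ rev (X x) @ u2" "X y" "u3 @ X z @ u4"] h1 X2[OF xin(2)] by simp
      have h3: "goodr c {} ((u1 @ rev (X x) @ u2 @ rev (X y) @ u3) @ rev (X z) @ u4)"
        using goodr_rev2[of c "{}" "u1 @ rev (X x) @ u2 @ rev (X y) @ u3" "X z" u4] h2 X2[OF xin(3)] by simp
      show "goodr c {} (gcl i (U @ L' @ V))" using h3 g2 by simp
    qed
  qed
qed

inductive lstep :: "bool \<Rightarrow> lt list \<Rightarrow> lt list \<Rightarrow> bool" for b where
  comm: "Suc m < m' \<or> Suc m' < m \<Longrightarrow> lstep b (U @ [(l,m,e),(l',m',e')] @ V) (U @ [(l',m',e'),(l,m,e)] @ V)"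
| r2: "lstep b (U @ [(l1,m,e),(l2,m,\<not>e)] @ V) (U @ V)"
| r3: "lstep b (U @ [(l1,Suc m,\<not>b),(l2,m,\<not>b),(l3,Suc m,e)] @ V) (U @ [(l3,m,e),(l2,Suc m,\<not>b),(l1,m,\<not>b)] @ V)"

definition Inv :: "nat \<Rightarrow> lt list \<Rightarrow> bool" where
  "Inv i W \<longleftrightarrow> wfw i W \<and> distinct (map fst W) \<and> kn i W"

lemma gpos_lstep: "lstep b W W' \<Longrightarrow> gpos W = gpos W'"
proof (induction rule: lstep.induct)
  case (comm m m' U l e l' e' V)
  have ne: "m \<noteq> m'" "m \<noteq> Suc m'" "m' \<noteq> Suc m" "Suc m \<noteq> Suc m'" using comm by auto
  have gp: "gpos [(l,m,e),(l',m',e')] = gpos [(l',m',e'),(l,m,e)]"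
    using ne by (auto simp: sw_def fun_eq_iff)
  show ?case by (rule ext) (simp only: gpos_append gp)
next
  case (r2 U l1 m e l2 V)
  have "gpos [(l1,m,e),(l2,m,\<not>e)] = id" by (auto simp: fun_eq_iff)
  then show ?case by (simp add: fun_eq_iff)
next
  case (r3 U l1 m l2 l3 e V)
  have "gpos [(l1,Suc m,\<not>b),(l2,m,\<not>b),(l3,Suc m,e)] = gpos [(l3,m,e),(l2,Suc m,\<not>b),(l1,m,\<not>b)]"
    by (auto simp: fun_eq_iff sw_def)
  then show ?case by (simp add: fun_eq_iff)
qed

lemma lstep_pres:
  assumes "lstep b W W'" "Inv i W"
  shows "Inv i W' \<and> vequiv (gcl i W) (gcl i W') \<and> (goodr c {} (gcl i W) \<longrightarrow> goodr c {} (gcl i W'))"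
  using assms
proof (induction rule: lstep.induct)
  case (comm m m' U l e l' e' V)
  have "Inv i (U @ [(l', m', e'), (l, m, e)] @ V)"
    using comm.prems kn_cong[OF gpos_lstep[OF lstep.comm[OF comm.hyps]]] by (auto simp: Inv_def)
  then show ?case using comm_gcl[OF comm.hyps] by simp
next
  case (r2 U l1 m e l2 V)
  have "Inv i (U @ V)"
    using r2.prems kn_cong[OF gpos_lstep[OF lstep.r2]] by (auto simp: Inv_def)
  then show ?case using r2_gcl[of i U "[(l1,m,e),(l2,m,\<not>e)]" V l1 m e l2] r2.prems by (auto simp: Inv_def)
next
  case (r3 U l1 m l2 l3 e V)
  have "Inv i (U @ [(l3,m,e),(l2,Suc m,\<not>b),(l1,m,\<not>b)] @ V)"
    using r3.prems kn_cong[OF gpos_lstep[OF lstep.r3]] by (auto simp: Inv_def)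
  then show ?case using r3_gcl[of i U "[(l1,Suc m,\<not>b),(l2,m,\<not>b),(l3,Suc m,e)]" V l1 m b l2 l3 e] r3.prems
    by (auto simp: Inv_def)
qed

lemma lsteps_pres:
  assumes "(lstep b)\<^sup>*\<^sup>* W W'" "Inv i W"
  shows "Inv i W' \<and> vequiv (gcl i W) (gcl i W') \<and> (goodr c {} (gcl i W) \<longrightarrow> goodr c {} (gcl i W'))"
  using assms
proof (induction rule: rtranclp_induct)
  case (step y z)
  then show ?case using lstep_pres[of b y z i c] vequiv_trans by blast
qed simp

lemma lstep_prefix: "lstep b W W' \<Longrightarrow> lstep b (P @ W) (P @ W')"
proof (induction rule: lstep.induct)
  case (comm m m' U l e l' e' V)
  then show ?case using lstep.comm[of m m' b "P @ U"] by simp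
next
  case (r2 U l1 m e l2 V)
  then show ?case using lstep.r2[of b "P @ U"] by simp
next
  case (r3 U l1 m l2 l3 e V)
  then show ?case using lstep.r3[of b "P @ U"] by simp
qed

lemma lsteps_prefix: "(lstep b)\<^sup>*\<^sup>* W W' \<Longrightarrow> (lstep b)\<^sup>*\<^sup>* (P @ W) (P @ W')"
proof (induction rule: rtranclp_induct)
  case (step y z)
  then show ?case using lstep_prefix[of b y z P] by (meson rtranclp.rtrancl_into_rtrancl)
qed simp

lemma move_left:
  "\<forall>y\<in>set T. Suc m < fst (snd y) \<or> Suc (fst (snd y)) < m \<Longrightarrow>
   (lstep b)\<^sup>*\<^sup>* (U @ T @ [(l,m,e)] @ V) (U @ [(l,m,e)] @ T @ V)"
proof (induction T arbitrary: U)
  case (Cons t T)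
  obtain lt mt et where t: "t = (lt, mt, et)" by (cases t)
  have a: "(lstep b)\<^sup>*\<^sup>* ((U @ [t]) @ T @ [(l,m,e)] @ V) ((U @ [t]) @ [(l,m,e)] @ T @ V)"
    using Cons.IH[of "U @ [t]"] Cons.prems by simp
  have c: "Suc mt < m \<or> Suc m < mt" using Cons.prems t by auto
  have b: "lstep b (U @ [(lt,mt,et),(l,m,e)] @ (T @ V)) (U @ [(l,m,e),(lt,mt,et)] @ (T @ V))"
    by (rule lstep.comm[OF c])
  show ?case using a b t by (simp add: rtranclp.rtrancl_into_rtrancl)
qed simp

fun onA :: "bool \<Rightarrow> nat \<Rightarrow> lt list \<Rightarrow> bool" where
  "onA b q [] = True"
| "onA b q ((l, m, e) # W) = ((q = m \<longrightarrow> e = b) \<and> (q = Suc m \<longrightarrow> e = (\<not> b)) \<and> onA b (sw m q) W)"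

definition isT :: "bool \<Rightarrow> nat \<Rightarrow> nat \<Rightarrow> lt list \<Rightarrow> bool" where
  "isT b i q T \<longleftrightarrow> map (\<lambda>x. fst (snd x)) T = rev [q..<i] \<and> (\<forall>x\<in>set T. snd (snd x) = (\<not> b))"

lemma rev_upt_split:
  assumes "q \<le> m0" "Suc (Suc m0) \<le> i"
  shows "rev [q..<i] = rev [Suc (Suc m0)..<i] @ [Suc m0, m0] @ rev [q..<m0]"
proof -
  have a: "[q..<i] = [q..<m0] @ [m0..<i]" using assms upt_add_eq_append[of q m0 "i - m0"] by simp
  have b: "[m0..<i] = m0 # Suc m0 # [Suc (Suc m0)..<i]" using assms by (simp add: upt_rec[of m0 i] upt_rec[of "Suc m0" i])
  show ?thesis using a b by simp
qed

lemma comb: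
  "onA b q W \<Longrightarrow> isT b i q T0 \<Longrightarrow> 1 \<le> q \<Longrightarrow> q \<le> i \<Longrightarrow> wfw i W \<Longrightarrow>
   \<exists>W' T1 p. (lstep b)\<^sup>*\<^sup>* (T0 @ W) (W' @ T1) \<and> isT b i p T1 \<and> wfw (i - 1) W' \<and> 1 \<le> p \<and> p \<le> i"
proof (induction W arbitrary: T0 q)
  case Nil
  then show ?case by (intro exI[of _ "[]"] exI[of _ T0] exI[of _ q]) simp
next
  case (Cons x W0)
  obtain l m e where x: "x = (l, m, e)" by (cases x)
  have m: "1 \<le> m" "m < i" and w0: "wfw i W0" using Cons.prems x by auto
  have oA: "q = m \<longrightarrow> e = b" "q = Suc m \<longrightarrow> e = (\<not> b)" "onA b (sw m q) W0" using Cons.prems(1) x by auto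
  have T0ms: "map (\<lambda>x. fst (snd x)) T0 = rev [q..<i]" and T0e: "\<forall>x\<in>set T0. snd (snd x) = (\<not> b)"
    using Cons.prems(2) by (auto simp: isT_def)
  consider (a) "Suc m < q" | (c) "Suc m = q" | (d) "m = q" | (b) "q < m" by linarith
  then show ?case
  proof cases
    case a
    have swq: "sw m q = q" using a by (auto simp: sw_def)
    have far: "\<forall>y\<in>set T0. Suc m < fst (snd y) \<or> Suc (fst (snd y)) < m"
    proof
      fix y assume "y \<in> set T0"
      then have "fst (snd y) \<in> set (rev [q..<i])" using T0ms by (metis image_eqI list.set_map)
      then show "Suc m < fst (snd y) \<or> Suc (fst (snd y)) < m" using a by auto
    qed
    have s1: "(lstep b)\<^sup>*\<^sup>* ([] @ T0 @ [(l,m,e)] @ W0) ([] @ [(l,m,e)] @ T0 @ W0)"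
      by (rule move_left[OF far])
    obtain W' T1 p where ih: "(lstep b)\<^sup>*\<^sup>* (T0 @ W0) (W' @ T1)" "isT b i p T1" "wfw (i - 1) W'" "1 \<le> p" "p \<le> i"
      using Cons.IH[of q T0] oA(3) swq Cons.prems w0 by auto
    have s2: "(lstep b)\<^sup>*\<^sup>* ([(l,m,e)] @ T0 @ W0) ([(l,m,e)] @ W' @ T1)" by (rule lsteps_prefix[OF ih(1)])
    show ?thesis
      apply (rule exI[of _ "(l,m,e) # W'"], rule exI[of _ T1], rule exI[of _ p])
      using s1 s2 ih a m Cons.prems(4) x by (auto intro: rtranclp_trans)
  next
    case c
    have swq: "sw m q = m" using c by (auto simp: sw_def)
    have e: "e = (\<not> b)" using oA c by simp
    have iT: "isT b i m (T0 @ [x])"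
      using T0ms T0e x e c m by (auto simp: isT_def upt_rec[of m i])
    obtain W' T1 p where ih: "(lstep b)\<^sup>*\<^sup>* ((T0 @ [x]) @ W0) (W' @ T1)" "isT b i p T1" "wfw (i - 1) W'" "1 \<le> p" "p \<le> i"
      using Cons.IH[of m "T0 @ [x]"] oA(3) swq iT m w0 by auto
    then show ?thesis by auto
  next
    case d
    have swq: "sw m q = Suc m" by (simp add: sw_def d)
    have e: "e = b" using oA d by simp
    have "rev [q..<i] = rev [Suc q..<i] @ [q]" using d m by (simp add: upt_rec[of q i])
    then obtain T0'' t where T0: "T0 = T0'' @ [t]" and ms'': "map (\<lambda>x. fst (snd x)) T0'' = rev [Suc q..<i]"
      and mt: "fst (snd t) = q"
      using T0ms by (auto simp: map_eq_append_conv)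
    obtain l' where t: "t = (l', q, \<not> b)" using T0e T0 mt by (cases t) auto
    have st: "lstep b (T0'' @ [(l',q,\<not>b),(l,q,\<not>\<not>b)] @ W0) (T0'' @ W0)" by (rule lstep.r2)
    have st': "(lstep b)\<^sup>*\<^sup>* (T0 @ x # W0) (T0'' @ W0)" using st T0 t x e d by simp
    have iT: "isT b i (Suc q) T0''" using ms'' T0e T0 by (auto simp: isT_def)
    obtain W' T1 p where ih: "(lstep b)\<^sup>*\<^sup>* (T0'' @ W0) (W' @ T1)" "isT b i p T1" "wfw (i - 1) W'" "1 \<le> p" "p \<le> i"
      using Cons.IH[of "Suc q" T0''] oA(3) swq iT m w0 d by auto
    then show ?thesis using st' by (meson rtranclp_trans)
  next
    case b
    obtain m0 where m0: "m = Suc m0" using b by (cases m) auto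
    have qm0: "q \<le> m0" using b m0 by simp
    have sp: "rev [q..<i] = rev [Suc (Suc m0)..<i] @ [Suc m0, m0] @ rev [q..<m0]"
      by (rule rev_upt_split) (use qm0 m m0 in auto)
    obtain Ta R where T0: "T0 = Ta @ R" and mTa: "map (\<lambda>x. fst (snd x)) Ta = rev [Suc (Suc m0)..<i]"
      and mR: "map (\<lambda>x. fst (snd x)) R = [Suc m0, m0] @ rev [q..<m0]"
      using T0ms sp by (auto simp: map_eq_append_conv)
    obtain t1 t2 Tb where R: "R = t1 # t2 # Tb" and mt: "fst (snd t1) = Suc m0" "fst (snd t2) = m0"
      and mTb: "map (\<lambda>x. fst (snd x)) Tb = rev [q..<m0]"
      using mR by (auto simp: map_eq_Cons_conv)
    obtain l1 where t1: "t1 = (l1, Suc m0, \<not> b)" using T0e T0 R mt by (cases t1) auto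
    obtain l2 where t2: "t2 = (l2, m0, \<not> b)" using T0e T0 R mt by (cases t2) auto
    have farb: "\<forall>y\<in>set Tb. Suc m < fst (snd y) \<or> Suc (fst (snd y)) < m"
    proof
      fix y assume "y \<in> set Tb"
      then have "fst (snd y) \<in> set (rev [q..<m0])" using mTb by (metis image_eqI list.set_map)
      then show "Suc m < fst (snd y) \<or> Suc (fst (snd y)) < m" using m0 by auto
    qed
    have s1: "(lstep b)\<^sup>*\<^sup>* ((Ta @ [t1, t2]) @ Tb @ [(l,m,e)] @ W0) ((Ta @ [t1, t2]) @ [(l,m,e)] @ Tb @ W0)"
      by (rule move_left[OF farb])
    have s2: "lstep b (Ta @ [(l1,Suc m0,\<not>b),(l2,m0,\<not>b),(l,Suc m0,e)] @ (Tb @ W0))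
                      (Ta @ [(l,m0,e),(l2,Suc m0,\<not>b),(l1,m0,\<not>b)] @ (Tb @ W0))"
      by (rule lstep.r3)
    have fara: "\<forall>y\<in>set Ta. Suc m0 < fst (snd y) \<or> Suc (fst (snd y)) < m0"
    proof
      fix y assume "y \<in> set Ta"
      then have "fst (snd y) \<in> set (rev [Suc (Suc m0)..<i])" using mTa by (metis image_eqI list.set_map)
      then show "Suc m0 < fst (snd y) \<or> Suc (fst (snd y)) < m0" by auto
    qed
    have s3: "(lstep b)\<^sup>*\<^sup>* ([] @ Ta @ [(l,m0,e)] @ ([(l2,Suc m0,\<not>b),(l1,m0,\<not>b)] @ Tb @ W0))
                           ([] @ [(l,m0,e)] @ Ta @ ([(l2,Suc m0,\<not>b),(l1,m0,\<not>b)] @ Tb @ W0))"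
      by (rule move_left[OF fara])
    define T0' where "T0' = Ta @ [(l2,Suc m0,\<not>b),(l1,m0,\<not>b)] @ Tb"
    have sall: "(lstep b)\<^sup>*\<^sup>* (T0 @ x # W0) ((l,m0,e) # T0' @ W0)"
    proof -
      have "(lstep b)\<^sup>*\<^sup>* (T0 @ x # W0) (Ta @ [(l1,Suc m0,\<not>b),(l2,m0,\<not>b),(l,Suc m0,e)] @ (Tb @ W0))"
        using s1 T0 R t1 t2 x m0 by simp
      also have "(lstep b) \<dots> (Ta @ [(l,m0,e),(l2,Suc m0,\<not>b),(l1,m0,\<not>b)] @ (Tb @ W0))" by (rule s2)
      also have "(lstep b)\<^sup>*\<^sup>* \<dots> ((l,m0,e) # T0' @ W0)" using s3 by (simp add: T0'_def)
      finally show ?thesis .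
    qed
    have iT: "isT b i q T0'"
      using mTa mTb T0e T0 R sp T0ms by (auto simp: isT_def T0'_def)
    have swq: "sw m q = q" using b by (auto simp: sw_def)
    obtain W' T1 p where ih: "(lstep b)\<^sup>*\<^sup>* (T0' @ W0) (W' @ T1)" "isT b i p T1" "wfw (i - 1) W'" "1 \<le> p" "p \<le> i"
      using Cons.IH[of q T0'] oA(3) swq iT Cons.prems w0 by auto
    have s4: "(lstep b)\<^sup>*\<^sup>* ([(l,m0,e)] @ T0' @ W0) ([(l,m0,e)] @ W' @ T1)" by (rule lsteps_prefix[OF ih(1)])
    show ?thesis
      apply (rule exI[of _ "(l,m0,e) # W'"], rule exI[of _ T1], rule exI[of _ p])
      using sall s4 ih m m0 qm0 Cons.prems(3) by (auto intro: rtranclp_trans)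
  qed
qed

lemma concat_shift:
  "concat (map (\<lambda>t. A t @ B t) [0..<Suc n]) = A 0 @ concat (map (\<lambda>t. B t @ A (Suc t)) [0..<n]) @ B n"
  by (induction n) auto

lemma nu_sw:
  assumes "1 \<le> m" "Suc (Suc m) \<le> i"
  shows "nu i (sw (Suc m) y) = sw m (nu i y)"
  using assms by (auto simp: nu_def sw_def)

lemma ent_nu:
  assumes "1 \<le> m" "Suc (Suc m) \<le> i"
  shows "ent (l, m, e) (nu i y) = ent (l, Suc m, e) y"
  using assms by (auto simp: nu_def)

lemma nu_eq_i: "1 \<le> y \<Longrightarrow> y \<le> i \<Longrightarrow> nu i y = i \<Longrightarrow> y = 1"
  by (auto simp: nu_def split: if_splits)

lemma distinct_map_upt_eq: "distinct (map f [0..<n]) \<Longrightarrow> a < n \<Longrightarrow> b < n \<Longrightarrow> f a = f b \<Longrightarrow> a = b"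
  by (auto simp: distinct_map inj_on_def)

lemma rot1:
  assumes m: "1 \<le> m" "Suc (Suc m) \<le> i" and k: "kn i (W @ [(l,Suc m,e)])" and w: "wfw i (W @ [(l,Suc m,e)])"
  shows "gcl i ((l,m,e) # W) = gcl i (W @ [(l,Suc m,e)]) \<and> kn i ((l,m,e) # W)"
proof -
  define g where "g = gpos W"
  define r where "r t = (GG i (W @ [(l,Suc m,e)]) ^^ t) i" for t
  define s where "s t = (GG i ((l,m,e) # W) ^^ t) i" for t
  have G1: "GG i (W @ [(l,Suc m,e)]) q = nu i (sw (Suc m) (g q))" for q by (simp add: GG_def g_def)
  have G2: "GG i ((l,m,e) # W) q = nu i (g (sw m q))" for q by (simp add: GG_def g_def)
  have swi: "sw m i = i" using m by (auto simp: sw_def)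
  have rs: "r t = sw m (s t)" for t
  proof (induction t)
    case 0 then show ?case by (simp add: r_def s_def swi)
  next
    case (Suc t)
    have "r (Suc t) = nu i (sw (Suc m) (g (r t)))" by (simp add: r_def G1)
    also have "\<dots> = sw m (nu i (g (r t)))" by (rule nu_sw[OF m])
    also have "nu i (g (r t)) = s (Suc t)" using Suc by (simp add: s_def G2)
    finally show ?case .
  qed
  have sr: "s t = sw m (r t)" for t using rs[of t] by simp
  have i1: "1 \<le> i" using m by simp
  obtain n where n: "i = Suc n" using i1 by (cases i) auto
  have ri: "r i = i" using k by (simp add: kn_def r_def)
  have rn: "1 \<le> r n \<and> r n \<le> i" using GG_pow_range[OF w i1] by (simp add: r_def)
  have grn: "1 \<le> g (r n) \<and> g (r n) \<le> i" using gpos_range[of i W "r n"] w rn by (simp add: g_def)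
  have "r i = GG i (W @ [(l,Suc m,e)]) (r n)" using n by (simp add: r_def)
  also have "\<dots> = nu i (sw (Suc m) (g (r n)))" by (rule G1)
  also have "\<dots> = sw m (nu i (g (r n)))" by (rule nu_sw[OF m])
  finally have "r i = sw m (nu i (g (r n)))" .
  then have "nu i (g (r n)) = i" using ri swi by (metis sw_sw)
  then have g1: "g (r n) = 1" using nu_eq_i grn by blast
  have e1: "ent (l, Suc m, e) 1 = []" using m by auto
  have orb1: "orb i (W @ [(l,Suc m,e)]) = map r [0..<i]" by (simp add: orb_def r_def)
  have orb2: "orb i ((l,m,e) # W) = map s [0..<i]" by (simp add: orb_def s_def)
  have c1: "gcl i (W @ [(l,Suc m,e)]) = concat (map (\<lambda>t. gtr W (r t) @ ent (l,Suc m,e) (g (r t))) [0..<i])"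
    unfolding gcl_def orb1 by (simp add: g_def comp_def)
  have c2: "gcl i ((l,m,e) # W) = concat (map (\<lambda>t. ent (l,m,e) (s t) @ gtr W (r t)) [0..<i])"
    unfolding gcl_def orb2 by (simp add: comp_def sr)
  have s0: "ent (l,m,e) (s 0) = []" using m by (simp add: s_def)
  have sS: "ent (l,m,e) (s (Suc t)) = ent (l,Suc m,e) (g (r t))" for t
  proof -
    have "s (Suc t) = GG i ((l,m,e) # W) (s t)" by (simp add: s_def)
    also have "\<dots> = nu i (g (sw m (s t)))" by (rule G2)
    finally have "s (Suc t) = nu i (g (sw m (s t)))" .
    then have "s (Suc t) = nu i (g (r t))" using rs[of t] by simp
    then show ?thesis using ent_nu[OF m] by simp
  qed
  have "gcl i ((l,m,e) # W) = concat (map (\<lambda>t. ent (l,m,e) (s t) @ gtr W (r t)) [0..<Suc n])"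
    using c2 n by simp
  also have "\<dots> = concat (map (\<lambda>t. gtr W (r t) @ ent (l,Suc m,e) (g (r t))) [0..<n]) @ gtr W (r n)"
    by (simp only: concat_shift s0 sS append_Nil)
  also have "\<dots> = gcl i (W @ [(l,Suc m,e)])"
  proof -
    have u: "[0..<i] = [0..<n] @ [n]" using n by simp
    have "gcl i (W @ [(l,Suc m,e)]) = concat (map (\<lambda>t. gtr W (r t) @ ent (l,Suc m,e) (g (r t))) [0..<n])
        @ gtr W (r n) @ ent (l,Suc m,e) (g (r n))"
      by (simp only: c1 u map_append list.map concat_append concat.simps append_Nil2 append_assoc)
    then show ?thesis using g1 e1 by simp
  qed
  finally have eq: "gcl i ((l,m,e) # W) = gcl i (W @ [(l,Suc m,e)])" .
  have d1: "distinct (map r [0..<i])" using k orb1 by (simp add: kn_def)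
  have "distinct (map s [0..<i])"
  proof -
    have sf: "s = sw m \<circ> r" by (rule ext) (simp add: sr)
    show ?thesis unfolding sf using d1 by (simp add: distinct_map inj_on_def sw_inj)
  qed
  moreover have "s i = i" using sr ri swi by simp
  ultimately have "kn i ((l,m,e) # W)" by (simp add: kn_def orb2 s_def)
  then show ?thesis using eq by simp
qed

definition sh :: "lt \<Rightarrow> lt" where
  "sh x = (fst x, fst (snd x) - 1, snd (snd x))"

lemma rot_many:
  "wfw i (W @ T) \<Longrightarrow> kn i (W @ T) \<Longrightarrow> (\<forall>x\<in>set T. 2 \<le> fst (snd x)) \<Longrightarrow>
   gcl i (W @ T) = gcl i (map sh T @ W) \<and> kn i (map sh T @ W)"
proof (induction T arbitrary: W rule: rev_induct)
  case Nil
  then show ?case by simp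
next
  case (snoc y T)
  obtain l m' e where y: "y = (l, m', e)" by (cases y)
  obtain m where m': "m' = Suc m" and m1: "1 \<le> m" using snoc.prems(3) y by (cases m') auto
  have mi: "Suc (Suc m) \<le> i" using snoc.prems(1) y m' by auto
  have r: "gcl i ((l,m,e) # W @ T) = gcl i ((W @ T) @ [(l,Suc m,e)]) \<and> kn i ((l,m,e) # W @ T)"
    by (rule rot1[OF m1 mi]) (use snoc.prems y m' in auto)
  have w2: "wfw i (((l,m,e) # W) @ T)" using snoc.prems m1 mi by auto
  have ih: "gcl i (((l,m,e) # W) @ T) = gcl i (map sh T @ (l,m,e) # W) \<and> kn i (map sh T @ (l,m,e) # W)"
    using snoc.IH[OF w2] r snoc.prems(3) by simp
  have "map sh (T @ [y]) @ W = map sh T @ (l,m,e) # W" by (simp add: sh_def y m')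
  then show ?case using r ih y m' by simp
qed

lemma gpos_hi: "wfw n W \<Longrightarrow> n < p \<Longrightarrow> gpos W p = p"
  by (induction W) (auto simp: gpos_Cons' sw_def)

lemma gtr_hi: "wfw n W \<Longrightarrow> n < p \<Longrightarrow> gtr W p = []"
proof (induction W)
  case (Cons x W)
  obtain l m e where "x = (l,m,e)" by (cases x)
  then show ?case using Cons by (auto simp: sw_def)
qed simp

lemma red1:
  assumes i2: "2 \<le> i" and w: "wfw (i - 1) W" and k: "kn i W"
  shows "gcl i W = gcl (i - 1) W \<and> kn (i - 1) W"
proof -
  obtain n where n: "i = Suc n" using i2 by (cases i) auto
  have n1: "1 \<le> n" using i2 n by simp
  define g where "g = gpos W"
  define r where "r t = (GG i W ^^ t) i" for t
  define s where "s t = (GG n W ^^ t) n" for t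
  have gi: "g i = i" using gpos_hi[OF w] n by (simp add: g_def)
  have wn: "wfw n W" using w n by simp
  have "map r [0..<i] = orb i W" by (simp add: orb_def r_def)
  then have dr: "distinct (map r [0..<i])" using k by (simp add: kn_def)
  have srange: "1 \<le> s t \<and> s t \<le> n" for t using GG_pow_range[OF wn n1] by (simp add: s_def)
  have gsrange: "1 \<le> g (s t) \<and> g (s t) \<le> n" for t using gpos_range[OF wn] srange by (simp add: g_def)
  have r0: "r 0 = i" by (simp add: r_def)
  have r0': "r 0 = r 0" ..
  have r1: "r 1 = n"
  proof -
    have "r 1 = nu i (g i)" by (simp add: r_def GG_def g_def)
    then show ?thesis using gi n n1 by (simp add: nu_def)
  qed
  have rs: "t < n \<Longrightarrow> r (Suc t) = s t" for t
  proof (induction t)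
    case 0 then show ?case using r1 by (simp add: s_def)
  next
    case (Suc t)
    then have ih: "r (Suc t) = s t" by simp
    have a: "r (Suc (Suc t)) = nu i (g (s t))" using ih by (simp add: r_def GG_def g_def)
    have b: "s (Suc t) = nu n (g (s t))" by (simp add: s_def GG_def g_def)
    have "g (s t) \<noteq> 1"
    proof
      assume "g (s t) = 1"
      then have "r (Suc (Suc t)) = r 0" using a by (simp add: nu_def r_def)
      moreover have "Suc (Suc t) < i" using Suc.prems n by simp
      ultimately show False using dr distinct_map_upt_eq[of r i "Suc (Suc t)" 0] r0' by simp
    qed
    then show ?case using a b by (simp add: nu_def)
  qed
  have mapr: "map r [0..<i] = i # map s [0..<n]"
  proof -
    have "map r [0..<Suc n] = r 0 # map (\<lambda>t. r (Suc t)) [0..<n]" by (simp add: map_upt_Suc del: upt_Suc)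
    also have "map (\<lambda>t. r (Suc t)) [0..<n] = map s [0..<n]" using rs by simp
    finally show ?thesis using r0 n by simp
  qed
  have gclEq: "gcl i W = gcl n W"
  proof -
    have "orb i W = map r [0..<i]" by (simp add: orb_def r_def)
    then have "gcl i W = concat (map (gtr W) (map r [0..<i]))" by (simp add: gcl_def)
    also have "\<dots> = gtr W i @ concat (map (gtr W) (map s [0..<n]))" using mapr by simp
    also have "gtr W i = []" using gtr_hi[OF wn] n by simp
    finally show ?thesis by (simp add: gcl_def orb_def s_def)
  qed
  have ds: "distinct (map s [0..<n])" using dr mapr by simp
  have sn: "s n = n"
  proof -
    obtain n' where n': "n = Suc n'" using n1 by (cases n) auto
    have "r (Suc n) = nu i (g (r n))" by (simp add: r_def GG_def g_def)
    moreover have "r (Suc n) = i" using k n by (simp add: kn_def r_def)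
    moreover have "r n = s n'" using rs[of n'] n' by simp
    ultimately have "nu i (g (s n')) = i" by simp
    then have "g (s n') = 1" using nu_eq_i gsrange[of n'] n by (metis le_SucI)
    then show ?thesis using n' by (simp add: s_def GG_def g_def nu_def)
  qed
  have "orb n W = map s [0..<n]" by (simp add: orb_def s_def)
  then have "kn n W" using ds sn by (simp add: kn_def s_def)
  then show ?thesis using gclEq n by simp
qed

lemma distinct_gtr: "distinct (map fst W) \<Longrightarrow> distinct (map fst (gtr W p))"
proof (induction W arbitrary: p)
  case (Cons x W)
  obtain l m e where x: "x = (l, m, e)" by (cases x)
  have "l \<notin> fst ` set (gtr W (sw m p))" using labels_gtr[of W "sw m p"] Cons.prems x by auto
  then show ?case using Cons x by auto
qed simp

lemma onA_of: "(\<forall>e\<in>set (gtr W q). fst (snd e) = b) \<Longrightarrow> onA b q W"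
proof (induction W arbitrary: q)
  case (Cons x W)
  obtain l m e where x: "x = (l, m, e)" by (cases x)
  show ?case using Cons x by (auto split: if_splits)
qed simp

lemma gpos_T: "map (\<lambda>x. fst (snd x)) T = rev [p..<i] \<Longrightarrow> p \<le> i \<Longrightarrow> gpos T i = p"
proof (induction T arbitrary: i)
  case Nil
  then show ?case by (cases "i = 0") auto
next
  case (Cons t T)
  have "rev [p..<i] \<noteq> []" using Cons.prems(1) by force
  then have "p < i" by simp
  then obtain i' where i: "i = Suc i'" and pi: "p \<le> i'" by (cases i) auto
  have "rev [p..<i] = i' # rev [p..<i']" using i pi by simp
  then have "fst (snd t) = i'" "map (\<lambda>x. fst (snd x)) T = rev [p..<i']" using Cons.prems by auto
  then show ?case using Cons.IH[of i'] pi i by (simp add: gpos_Cons' sw_def)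
qed

lemma gcl_Nil: "gcl i [] = []"
  by (simp add: gcl_def)

lemma main:
  "\<forall>W. wfw i W \<longrightarrow> distinct (map fst W) \<longrightarrow> kn i W \<longrightarrow> goodr b {} (gcl i W) \<longrightarrow> vequiv (gcl i W) []"
proof (induction i)
  case 0
  show ?case
  proof (intro allI impI)
    fix W assume "wfw 0 W"
    then have "W = []" by (cases W) auto
    then show "vequiv (gcl 0 W) []" by (simp add: gcl_Nil)
  qed
next
  case (Suc n)
  show ?case
  proof (intro allI impI)
    fix W assume w: "wfw (Suc n) W" and d: "distinct (map fst W)" and k: "kn (Suc n) W"
      and g: "goodr b {} (gcl (Suc n) W)"
    show "vequiv (gcl (Suc n) W) []"
    proof (cases "n = 0")
      case True
      then have "W = []" using w by (cases W) auto
      then show ?thesis by (simp add: gcl_Nil)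
    next
      case False
      define i where "i = Suc n"
      have i2: "2 \<le> i" using False by (simp add: i_def)
      have orbi: "orb i W = i # map (\<lambda>t. (GG i W ^^ t) i) [1..<i]"
        unfolding orb_def i_def by (simp add: upt_conv_Cons del: upt_Suc)
      have gsplit: "gcl i W = gtr W i @ concat (map (gtr W) (map (\<lambda>t. (GG i W ^^ t) i) [1..<i]))"
        by (subst gcl_def, subst orbi) simp
      have first: "\<forall>e\<in>set (gtr W i). fst (snd e) = b"
        using goodr_prefix[of b "{}" "gtr W i" "concat (map (gtr W) (map (\<lambda>t. (GG i W ^^ t) i) [1..<i]))"] g gsplit
          distinct_gtr[OF d] by (simp add: i_def)
      have oA: "onA b i W" using onA_of[OF first] .
      have iT0: "isT b i i []" by (simp add: isT_def)
      obtain W' T1 p where cb: "(lstep b)\<^sup>*\<^sup>* ([] @ W) (W' @ T1)" "isT b i p T1" "wfw (i - 1) W'" "1 \<le> p" "p \<le> i"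
        using comb[OF oA iT0 _ _ w[folded i_def]] i2 by auto
      have inv0: "Inv i W" using w d k by (simp add: Inv_def i_def)
      have pres: "Inv i (W' @ T1) \<and> vequiv (gcl i W) (gcl i (W' @ T1)) \<and>
                  (goodr b {} (gcl i W) \<longrightarrow> goodr b {} (gcl i (W' @ T1)))"
        using lsteps_pres[of b W "W' @ T1" i b] cb(1) inv0 by simp
      have T1ms: "map (\<lambda>x. fst (snd x)) T1 = rev [p..<i]" using cb(2) by (simp add: isT_def)
      have gW': "gpos W' i = i" using gpos_hi[OF cb(3)] i2 by simp
      have gpT: "gpos (W' @ T1) i = p" using gW' gpos_T[OF T1ms cb(5)] by simp
      have p2: "2 \<le> p"
      proof (rule ccontr)
        assume "\<not> 2 \<le> p"
        then have "p = 1" using cb(4) by simp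
        then have "GG i (W' @ T1) i = i" using gpT by (simp add: GG_def nu_def)
        then have "orb i (W' @ T1) ! 1 = orb i (W' @ T1) ! 0" using i2 by (simp add: orb_def)
        moreover have "distinct (orb i (W' @ T1))" using pres by (simp add: Inv_def kn_def)
        moreover have "length (orb i (W' @ T1)) = i" by (simp add: orb_def)
        ultimately show False using i2 by (simp add: nth_eq_iff_index_eq)
      qed
      have T1m: "\<forall>x\<in>set T1. p \<le> fst (snd x) \<and> fst (snd x) < i"
      proof
        fix x assume "x \<in> set T1"
        then have "fst (snd x) \<in> set (rev [p..<i])" using T1ms by (metis image_eqI list.set_map)
        then show "p \<le> fst (snd x) \<and> fst (snd x) < i" by auto
      qed
      have wWT: "wfw i (W' @ T1)" and kWT: "kn i (W' @ T1)" and dWT: "distinct (map fst (W' @ T1))"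
        using pres by (auto simp: Inv_def)
      have rm: "gcl i (W' @ T1) = gcl i (map sh T1 @ W') \<and> kn i (map sh T1 @ W')"
        by (rule rot_many[OF wWT kWT]) (use T1m p2 in auto)
      define W1 where "W1 = map sh T1 @ W'"
      have w1: "wfw (i - 1) W1" using T1m p2 cb(3) by (auto simp: W1_def sh_def wfw_def)
      have k1: "kn i W1" using rm by (simp add: W1_def)
      have rd: "gcl i W1 = gcl (i - 1) W1 \<and> kn (i - 1) W1" by (rule red1[OF i2 w1 k1])
      have d1: "distinct (map fst W1)" using dWT by (auto simp: W1_def sh_def comp_def)
      have g1: "goodr b {} (gcl (i - 1) W1)" using pres g rm rd by (simp add: W1_def i_def)
      have "vequiv (gcl (i - 1) W1) []" using Suc.IH w1 d1 rd g1 by (simp add: i_def)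
      moreover have "gcl i W1 = gcl i (W' @ T1)" using rm by (simp add: W1_def)
      ultimately have "vequiv (gcl i W) []" using pres rd vequiv_trans by metis
      then show ?thesis by (simp add: i_def)
    qed
  qed
qed

fun clw :: "nat \<Rightarrow> nat list \<Rightarrow> lt list" where
  "clw n [] = []"
| "clw n (m # ms) = (n, m, True) # clw (Suc n) ms"

lemma trav_virt: "trav n (map Virt vs @ rest) p = trav (n + length vs) rest (fold sw vs p)"
  by (induction vs arbitrary: n p) auto

lemma trav_cl: "trav n (map Cl ms) p = (gtr (clw n ms) p, gpos (clw n ms) p)"
  by (induction ms arbitrary: n p) (auto simp: Let_def split: prod.splits)

lemma fold_sw: "1 \<le> p \<Longrightarrow> fold sw [1..<Suc n] p = (if p = 1 then Suc n else if p \<le> Suc n then p - 1 else p)"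
proof (induction n)
  case 0
  then show ?case by simp
next
  case (Suc n)
  define v where "v = fold sw [1..<Suc n] p"
  have IH: "v = (if p = 1 then Suc n else if p \<le> Suc n then p - 1 else p)"
    using Suc unfolding v_def by blast
  have u: "[1..<Suc (Suc n)] = [1..<Suc n] @ [Suc n]" by simp
  have step: "fold sw [1..<Suc (Suc n)] p = sw (Suc n) v"
    unfolding v_def by (simp only: u fold_append comp_def fold_Cons fold_Nil id_def)
  show ?case unfolding step IH using Suc.prems by (auto simp: sw_def)
qed

lemma fold_sw_nu: "1 \<le> p \<Longrightarrow> p \<le> i \<Longrightarrow> fold sw [1..<i] p = nu i p"
  using fold_sw[of p "i - 1"] by (cases i) (auto simp: nu_def)

lemma labels_clw: "map fst (clw n ms) = [n..<n + length ms]"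
  by (induction ms arbitrary: n) (simp_all add: upt_conv_Cons del: upt_Suc)

lemma ms_clw: "map (\<lambda>x. fst (snd x)) (clw n ms) = ms"
  by (induction ms arbitrary: n) auto

lemma e_clw: "\<forall>x\<in>set (clw n ms). snd (snd x) = True"
  by (induction ms arbitrary: n) auto

definition msf :: "nat \<Rightarrow> nat \<Rightarrow> nat \<Rightarrow> nat list" where
  "msf i j k = concat (replicate (j - 1) [1..<i]) @ rev [1..<k + 1]"

lemma ijk_eq: "ijk_braid i j k = map Virt [1..<i] @ map Cl (msf i j k)"
  by (simp add: ijk_braid_def VB1_def Bk_def msf_def map_concat)

lemma length_msf: "length (msf i j k) = (j - 1) * (i - 1) + k"
  by (simp add: msf_def length_concat sum_list_replicate)

lemma orbit_lemma:
  assumes fA: "\<forall>x\<in>A. f x \<in> A" and inj: "inj_on f A" and x0: "x0 \<in> A" and fin: "finite A"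
    and cA: "card A = n" and cov: "\<forall>y\<in>A. \<exists>t. (f ^^ t) x0 = y"
  shows "distinct (map (\<lambda>t. (f ^^ t) x0) [0..<n]) \<and> (f ^^ n) x0 = x0"
proof -
  define xs where "xs t = (f ^^ t) x0" for t
  have xsA: "xs t \<in> A" for t by (induction t) (use fA x0 in \<open>auto simp: xs_def\<close>)
  have xs_add: "xs (t + s) = (f ^^ t) (xs s)" for t s by (simp add: xs_def funpow_add)
  have dist: "distinct (map xs [0..<n])"
  proof (rule ccontr)
    assume "\<not> distinct (map xs [0..<n])"
    then obtain a b where ab: "a < b" "b < n" "xs a = xs b"
      by (auto simp: distinct_conv_nth) (metis linorder_neqE_nat)
    have per: "xs t \<in> xs ` {0..<b}" for t
    proof (induction t rule: less_induct)
      case (less t)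
      show ?case
      proof (cases "t < b")
        case True then show ?thesis by auto
      next
        case False
        then have "xs t = xs ((t - b) + a)" using xs_add[of "t - b" b] xs_add[of "t - b" a] ab(3) by simp
        moreover have "(t - b) + a < t" using False ab(1) by simp
        ultimately show ?thesis using less.IH by metis
      qed
    qed
    have "A \<subseteq> xs ` {0..<b}" using cov per by (auto simp: xs_def)
    then have "card A \<le> card (xs ` {0..<b})" using card_mono by blast
    also have "\<dots> \<le> b" using card_image_le[of "{0..<b}" xs] by simp
    finally show False using cA ab(2) by simp
  qed
  have setA: "set (map xs [0..<n]) = A"
  proof -
    have "set (map xs [0..<n]) \<subseteq> A" using xsA by auto
    moreover have "card (set (map xs [0..<n])) = n" using dist distinct_card by fastforce
    ultimately show ?thesis using cA fin by (simp add: card_subset_eq)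
  qed
  have ret: "xs n = x0"
  proof -
    have "xs n \<in> set (map xs [0..<n])" using setA xsA by simp
    then obtain a where a: "a < n" "xs n = xs a" by auto
    show ?thesis
    proof (cases a)
      case 0 then show ?thesis using a by (simp add: xs_def)
    next
      case (Suc a')
      obtain n' where n': "n = Suc n'" using a by (cases n) auto
      have "f (xs n') = f (xs a')" using a Suc n' by (simp add: xs_def)
      then have "xs n' = xs a'" using inj xsA by (meson inj_onD)
      moreover have "a' < n'" "n' < n" using a Suc n' by auto
      ultimately show ?thesis using dist distinct_map_upt_eq[of xs n n' a'] by simp
    qed
  qed
  have e: "map (\<lambda>t. (f ^^ t) x0) [0..<n] = map xs [0..<n]" by (simp add: xs_def)
  show ?thesis unfolding e using dist ret[unfolded xs_def] by simp
qed

lemma wfw_clw: "(\<forall>m\<in>set ms. 1 \<le> m \<and> m < i) \<Longrightarrow> wfw i (clw n ms)"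
  by (induction ms arbitrary: n) auto

lemma msf_range: "k < i \<Longrightarrow> \<forall>m\<in>set (msf i j k). 1 \<le> m \<and> m < i"
  by (auto simp: msf_def)

lemma nu_inj: "1 \<le> p \<Longrightarrow> p \<le> i \<Longrightarrow> 1 \<le> q \<Longrightarrow> q \<le> i \<Longrightarrow> nu i p = nu i q \<Longrightarrow> p = q"
  by (auto simp: nu_def split: if_splits)

context
  fixes i j k :: nat
  assumes ki: "k < i"
begin

definition "W0 = clw (i - 1) (msf i j k)"

lemma i1: "1 \<le> i" using ki by simp

lemma wfW0: "wfw i W0" unfolding W0_def by (rule wfw_clw[OF msf_range[OF ki]])

lemma dW0: "distinct (map fst W0)" unfolding W0_def labels_clw by simp

lemma trav_eq:
  assumes "1 \<le> p" "p \<le> i"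
  shows "trav 0 (ijk_braid i j k) p = (gtr W0 (nu i p), gpos W0 (nu i p))"
  unfolding ijk_eq trav_virt trav_cl W0_def using fold_sw_nu[OF assms] by simp

lemma bperm_eq: "1 \<le> p \<Longrightarrow> p \<le> i \<Longrightarrow> bperm (ijk_braid i j k) p = gpos W0 (nu i p)"
  unfolding bperm_def using trav_eq by simp

lemma pow_eq: "nu i ((bperm (ijk_braid i j k) ^^ t) 1) = (GG i W0 ^^ t) i \<and>
   1 \<le> (bperm (ijk_braid i j k) ^^ t) 1 \<and> (bperm (ijk_braid i j k) ^^ t) 1 \<le> i"
proof (induction t)
  case 0
  then show ?case using i1 by (simp add: nu_def)
next
  case (Suc t)
  let ?x = "(bperm (ijk_braid i j k) ^^ t) 1"
  have bx: "bperm (ijk_braid i j k) ?x = gpos W0 (nu i ?x)" using Suc bperm_eq by blast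
  have r: "1 \<le> nu i ?x \<and> nu i ?x \<le> i" using nu_range i1 Suc by blast
  have r2: "1 \<le> gpos W0 (nu i ?x) \<and> gpos W0 (nu i ?x) \<le> i" using gpos_range[OF wfW0] r by blast
  show ?case using Suc bx r2 by (simp add: GG_def)
qed

lemma code_eq: "closure_code i (ijk_braid i j k) = gcl i W0"
proof -
  have "fst (trav 0 (ijk_braid i j k) ((bperm (ijk_braid i j k) ^^ t) 1)) = gtr W0 ((GG i W0 ^^ t) i)" for t
    using trav_eq pow_eq[of t] by simp
  then show ?thesis by (simp add: closure_code_def gcl_def orb_def comp_def)
qed

lemma kn_W0:
  assumes "closure_is_knot i (ijk_braid i j k)"
  shows "kn i W0"
proof -
  let ?G = "GG i W0"
  have fA: "\<forall>x\<in>{1..i}. ?G x \<in> {1..i}" using GG_range[OF wfW0] by auto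
  have inj: "inj_on ?G {1..i}"
  proof (rule inj_onI)
    fix x y assume x: "x \<in> {1..i}" and y: "y \<in> {1..i}" and e: "?G x = ?G y"
    have "gpos W0 x = gpos W0 y"
      using e nu_inj gpos_range[OF wfW0] x y by (simp add: GG_def) (metis atLeastAtMost_iff)
    then show "x = y" using gpos_inj by blast
  qed
  have cov: "\<forall>y\<in>{1..i}. \<exists>t. (?G ^^ t) i = y"
  proof
    fix y assume y: "y \<in> {1..i}"
    define p where "p = (if y = i then 1 else Suc y)"
    have p: "p \<in> {1..i}" "nu i p = y" using y by (auto simp: p_def nu_def)
    have "\<exists>t. (bperm (ijk_braid i j k) ^^ t) 1 = p" using assms p(1) unfolding closure_is_knot_def by blast
    then obtain t where "(bperm (ijk_braid i j k) ^^ t) 1 = p" by blast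
    then show "\<exists>t. (?G ^^ t) i = y" using pow_eq[of t] p by metis
  qed
  have "distinct (map (\<lambda>t. (?G ^^ t) i) [0..<i]) \<and> (?G ^^ i) i = i"
    by (rule orbit_lemma[OF fA inj _ _ _ cov]) (use i1 in auto)
  then show ?thesis by (simp add: kn_def orb_def)
qed

end

definition flipE :: "nat set \<Rightarrow> entry \<Rightarrow> entry" where
  "flipE F e = (if fst e \<in> F then (fst e, \<not> fst (snd e), \<not> snd (snd e)) else e)"

definition flipW :: "nat set \<Rightarrow> lt list \<Rightarrow> lt list" where
  "flipW F W = map (\<lambda>x. if fst x \<in> F then (fst x, fst (snd x), \<not> snd (snd x)) else x) W"

lemma flipW_Cons: "flipW F (x # W) = (if fst x \<in> F then (fst x, fst (snd x), \<not> snd (snd x)) else x) # flipW F W"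
  by (simp add: flipW_def)

lemma gpos_flip: "gpos (flipW F W) p = gpos W p"
  by (induction W arbitrary: p) (auto simp: flipW_def gpos_Cons')

lemma gtr_flip: "gtr (flipW F W) p = map (flipE F) (gtr W p)"
proof (induction W arbitrary: p)
  case (Cons x W)
  obtain l m e where x: "x = (l, m, e)" by (cases x)
  show ?case using Cons by (auto simp: x flipW_Cons flipE_def gtr_Cons')
qed (simp add: flipW_def)

lemma gcl_flip: "gcl i (flipW F W) = map (flipE F) (gcl i W)"
proof -
  have "gpos (flipW F W) = gpos W" by (rule ext) (rule gpos_flip)
  then have "orb i (flipW F W) = orb i W" by (rule orb_cong)
  moreover have "gtr (flipW F W) = (\<lambda>q. map (flipE F) (gtr W q))" by (rule ext) (rule gtr_flip)
  ultimately show ?thesis by (simp add: gcl_def map_concat comp_def)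
qed

lemma kn_flip: "kn i (flipW F W) = kn i W"
  by (rule kn_cong) (rule ext, rule gpos_flip)

lemma wfw_flip: "wfw i (flipW F W) = wfw i W"
  by (induction W) (auto simp: flipW_Cons flipW_def)

lemma fst_flip: "map fst (flipW F W) = map fst W"
  by (auto simp: flipW_def)

lemma fst_flipE[simp]: "fst (flipE F e) = fst e"
  by (simp add: flipE_def)

lemma flipE_empty: "flipE {} e = e"
  by (simp add: flipE_def)

lemma flip_comp: "A \<inter> B = {} \<Longrightarrow> flipE A (flipE B e) = flipE (A \<union> B) e"
  by (auto simp: flipE_def)

lemma cc_eq: "crossing_change c w = map (flipE {c}) w"
  by (auto simp: crossing_change_def flipE_def)

lemma labels_flip: "labels (map (flipE F) w) = labels w"
  unfolding labels_def by (simp add: image_image)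

lemma unknot_flip:
  "distinct cs \<Longrightarrow> set cs \<subseteq> labels w \<Longrightarrow> vequiv (map (flipE (set cs)) w) [] \<Longrightarrow> unknot_with w (length cs)"
proof (induction cs arbitrary: w)
  case Nil
  then have "vequiv w []" by (simp add: flipE_empty)
  then show ?case using unknot_with.move[OF _ unknot_with.base] by simp
next
  case (Cons c cs)
  let ?w' = "crossing_change c w"
  have l: "labels ?w' = labels w" by (simp add: cc_eq labels_flip)
  have "map (flipE (set cs)) ?w' = map (flipE (set (c # cs))) w"
    using Cons.prems(1) by (auto simp: cc_eq flip_comp)
  then have "unknot_with ?w' (length cs)" using Cons l by auto
  then show ?case using Cons.prems(2) unknot_with.cc by auto
qed

fun badr :: "bool \<Rightarrow> nat set \<Rightarrow> gcode \<Rightarrow> nat set" where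
  "badr b S [] = {}"
| "badr b S (e # w) = (if fst e \<notin> S \<and> fst (snd e) \<noteq> b then {fst e} else {}) \<union> badr b (insert (fst e) S) w"

lemma badr_S: "badr b S w \<inter> S = {}"
  by (induction w arbitrary: S) auto

lemma badr_sub: "badr b S w \<subseteq> labels w"
  by (induction w arbitrary: S) (auto simp: labels_def)

lemma badr_disj: "badr True S w \<inter> badr False S w = {}"
proof (induction w arbitrary: S)
  case (Cons e w)
  have "fst e \<notin> badr True (insert (fst e) S) w" "fst e \<notin> badr False (insert (fst e) S) w"
    using badr_S by blast+
  then show ?case using Cons[of "insert (fst e) S"] by auto
qed simp

lemma goodr_flip:
  "(\<forall>c. c \<notin> S \<longrightarrow> c \<in> fst ` set w \<longrightarrow> (c \<in> F \<longleftrightarrow> c \<in> badr b S w)) \<Longrightarrow> goodr b S (map (flipE F) w)"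
proof (induction w arbitrary: S)
  case (Cons e w)
  have nb: "fst e \<notin> badr b (insert (fst e) S) w" using badr_S by blast
  have h: "fst e \<notin> S \<longrightarrow> fst (snd (flipE F e)) = b"
    using Cons.prems nb by (auto simp: flipE_def)
  have t: "goodr b (insert (fst e) S) (map (flipE F) w)"
    by (rule Cons.IH) (use Cons.prems in auto)
  show ?case using h t by simp
qed simp

lemma length_clw: "length (clw n ms) = length ms"
  by (induction ms arbitrary: n) auto

lemma finite_labels: "finite (labels w)"
  by (simp add: labels_def)

theorem proposition3p13:
  fixes i j k :: nat
  assumes "j > 0" and "k < i"
    and "closure_is_knot i (ijk_braid i j k)"
  shows "null_homotopic (closure_code i (ijk_braid i j k)) \<and>
         2 * int (vu (closure_code i (ijk_braid i j k)))
           \<le> (int i - 1) * (int j - 1) + int k"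
proof -
  define w where "w = closure_code i (ijk_braid i j k)"
  define W where "W = W0 i j k"
  have ceq: "w = gcl i W" unfolding w_def W_def by (rule code_eq[OF assms(2)])
  have wf: "wfw i W" unfolding W_def by (rule wfW0[OF assms(2)])
  have d: "distinct (map fst W)" unfolding W_def by (rule dW0[OF assms(2)])
  have k: "kn i W" unfolding W_def by (rule kn_W0[OF assms(2,3)])
  have unk: "unknot_with w (card (badr b {} w))" for b
  proof -
    define F where "F = badr b {} w"
    have fF: "finite F" using badr_sub[of b "{}" w] finite_labels finite_subset by (auto simp: F_def)
    define cs where "cs = sorted_list_of_set F"
    have cs: "set cs = F" "distinct cs" "length cs = card F" using fF by (auto simp: cs_def)
    have g: "goodr b {} (gcl i (flipW F W))"
      unfolding gcl_flip ceq[symmetric] by (rule goodr_flip) (simp add: F_def)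
    have "vequiv (gcl i (flipW F W)) []"
      using main[of i b] wf d k g by (simp add: wfw_flip kn_flip fst_flip)
    then have "vequiv (map (flipE (set cs)) w) []" using cs(1) by (simp add: gcl_flip ceq)
    moreover have "set cs \<subseteq> labels w" using cs(1) badr_sub by (simp add: F_def)
    ultimately have "unknot_with w (length cs)" using unknot_flip cs(2) by blast
    then show ?thesis using cs(3) by (simp add: F_def)
  qed
  have vle: "vu w \<le> card (badr b {} w)" for b unfolding vu_def by (rule Least_le) (rule unk)
  have sum: "card (badr True {} w) + card (badr False {} w) \<le> card (labels w)"
  proof -
    have "card (badr True {} w) + card (badr False {} w) = card (badr True {} w \<union> badr False {} w)"
      using badr_disj[of "{}" w] finite_labels badr_sub finite_subset by (metis card_Un_disjoint)
    also have "\<dots> \<le> card (labels w)" using badr_sub finite_labels by (metis Un_least card_mono)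
    finally show ?thesis .
  qed
  have lab: "card (labels w) \<le> (j - 1) * (i - 1) + k"
  proof -
    have "card (labels w) \<le> card (fst ` set W)" using labels_gcl[of i W] ceq by (simp add: card_mono)
    also have "\<dots> \<le> card (set W)" by (rule card_image_le) simp
    also have "\<dots> \<le> length W" by (rule card_length)
    also have "\<dots> = (j - 1) * (i - 1) + k" unfolding W_def W0_def[OF assms(2)] by (simp add: length_clw length_msf)
    finally show ?thesis .
  qed
  have nat_ineq: "2 * vu w \<le> (j - 1) * (i - 1) + k"
    using vle[of True] vle[of False] sum lab by linarith
  have nh: "null_homotopic w" using unk[of True] by (auto simp: null_homotopic_def)
  have "int (2 * vu w) \<le> int ((j - 1) * (i - 1) + k)" using nat_ineq by linarith
  then have "2 * int (vu w) \<le> (int i - 1) * (int j - 1) + int k"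
    using assms(1,2) by (simp add: of_nat_diff mult.commute)
  then show ?thesis using nh by (simp add: w_def)
qed


end
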